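(* Let $r\ge2$ be an integer and let $\varphi,\psi$ be a discrete and a continuous kernel satisfying conditions (i) and (ii) for this $r$, with both satisfying condition $(\Theta)$ for some $\theta>r+1$. 1. If $f\in Lip^*(\alpha,L^\infty)$ with $0<\alpha<r$, then $\|\mathcal{D}_w^{\varphi,\psi}f-f\|_\infty=\mathcal{O}(w^{-\alpha})$ as $w\to+\infty$. 2. If $f\in C^r(\mathbb{R})$, then $\|\mathcal{D}_w^{\varphi,\psi}f-f\|_\infty=\mathcal{O}(w^{-r})$ as $w\to+\infty$.
   Context: $C(\mathbb{R})$ is the space of bounded, uniformly continuous real functions on $\mathbb{R}$ with the sup-norm. $C^r(\mathbb{R})$ is the set of $r$-times differentiable $f$ with $f,f',\dots,f^{(r)}\in C(\mathbb{R})$. A discrete kernel is a bounded function $\varphi\in L^1(\mathbb{R})$ with $\sum_{k\in\mathbb{Z}}\varphi(u-k)=1$ for all $u$. A continuous kernel is a function $\psi\in L^1(\mathbb{R})$, bounded near $0$, with $\int_{\mathbb{R}}\psi=1$. Moments: $m_\nu(\varphi,u)=\sum_{k}\varphi(u-k)(k-u)^\nu$ and $\widetilde m_\nu(\psi)=\int u^\nu\psi(u)\,du$. Durrmeyer sampling operators: \[ (\mathcal{D}_w^{\varphi,\psi}f)(x)=\sum_{k\in\mathbb{Z}}\varphi(wx-k)\,w\int_{\mathbb{R}}\psi(wu-k)f(u)\,du,\qquad w>0. \] Conditions: - (i): $m_\nu(\varphi,u)=:m_\nu(\varphi)$ is independent of $u$ for $\nu=1,\dots,r$. - (ii): $\sum_{\nu=0}^{i}\binom{i}{\nu}m_{i-\nu}(\varphi)\widetilde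 m_\nu(\psi)=0$ for $i=1,\dots,r-1$. - $(\Theta)$ with $\theta$: $\xi(u)=\mathcal{O}(|u|^{-\theta})$ as $|u|\to\infty$. Moduli of smoothness: $\omega_m(f,\delta)_p=\sup_{|t|\le\delta}\|\sum_{j=0}^m\binom{m}{j}(-1)^{m-j}f(\cdot+jt)\|_p$. For $\alpha>0$, $Lip^*(\alpha,L^\infty)$ is the set of $f\in C(\mathbb{R})$ with $\omega_{\lfloor\alpha\rfloor+1}(f,\delta)_\infty=\mathcal{O}(\delta^\alpha)$ as $\delta\to0^+$. *)

theory Defs
  imports "HOL-Analysis.Analysis" "HOL-Library.Landau_Symbols"
begin

definition bucont :: "(real \<Rightarrow> real) \<Rightarrow> bool" where
  "bucont f \<longleftrightarrow> bounded (range f) \<and> uniformly_continuous_on UNIV f"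

definition Cr :: "nat \<Rightarrow> (real \<Rightarrow> real) \<Rightarrow> bool" where
  "Cr r f \<longleftrightarrow>
     (\<forall>k<r. \<forall>x. ((deriv ^^ k) f has_real_derivative (deriv ^^ Suc k) f x) (at x)) \<and>
     (\<forall>k\<le>r. bucont ((deriv ^^ k) f))"

definition discrete_kernel :: "(real \<Rightarrow> real) \<Rightarrow> bool" where
  "discrete_kernel \<phi> \<longleftrightarrow> bounded (range \<phi>) \<and> integrable lborel \<phi> \<and>
     (\<forall>u. ((\<lambda>k::int. \<phi> (u - of_int k)) has_sum 1) UNIV)"

definition continuous_kernel :: "(real \<Rightarrow> real) \<Rightarrow> bool" where
  "continuous_kernel \<psi> \<longleftrightarrow> integrable lborel \<psi> \<and>
     (\<exists>\<delta>>0. \<exists>M. \<forall>u. \<bar>u\<bar> < \<delta> \<longrightarrow> \<bar>\<psi> u\<bar> \<le> M) \<and>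
     (LINT u|lborel. \<psi> u) = 1"

definition dmoment :: "(real \<Rightarrow> real) \<Rightarrow> nat \<Rightarrow> real \<Rightarrow> real" where
  "dmoment \<phi> \<nu> u = (\<Sum>\<^sub>\<infinity>k::int. \<phi> (u - of_int k) * (of_int k - u) ^ \<nu>)"

definition cmoment :: "(real \<Rightarrow> real) \<Rightarrow> nat \<Rightarrow> real" where
  "cmoment \<psi> \<nu> = (LINT u|lborel. u ^ \<nu> * \<psi> u)"

text \<open>Condition (i): m_nu(phi,u) independent of u for nu = 1..r;
  then m_nu(phi) := m_nu(phi,0).\<close>
definition cond_i :: "nat \<Rightarrow> (real \<Rightarrow> real) \<Rightarrow> bool" where
  "cond_i r \<phi> \<longleftrightarrow> (\<forall>\<nu>\<in>{1..r}. \<forall>u. dmoment \<phi> \<nu> u = dmoment \<phi> \<nu> 0)"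

definition cond_ii :: "nat \<Rightarrow> (real \<Rightarrow> real) \<Rightarrow> (real \<Rightarrow> real) \<Rightarrow> bool" where
  "cond_ii r \<phi> \<psi> \<longleftrightarrow> (\<forall>i\<in>{1..r-1}.
     (\<Sum>\<nu>=0..i. real (i choose \<nu>) * dmoment \<phi> (i - \<nu>) 0 * cmoment \<psi> \<nu>) = 0)"

definition cond_Theta :: "real \<Rightarrow> (real \<Rightarrow> real) \<Rightarrow> bool" where
  "cond_Theta \<theta> \<xi> \<longleftrightarrow> \<xi> \<in> O[at_infinity](\<lambda>u. \<bar>u\<bar> powr (-\<theta>))"

definition durrmeyer :: "(real \<Rightarrow> real) \<Rightarrow> (real \<Rightarrow> real) \<Rightarrow> real \<Rightarrow> (real \<Rightarrow> real) \<Rightarrow> real \<Rightarrow> real" where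
  "durrmeyer \<phi> \<psi> w f x =
     (\<Sum>\<^sub>\<infinity>k::int. \<phi> (w * x - of_int k) * (w * (LINT u|lborel. \<psi> (w * u - of_int k) * f u)))"

definition supnorm :: "(real \<Rightarrow> real) \<Rightarrow> real" where
  "supnorm g = (SUP x. \<bar>g x\<bar>)"

definition fdiff :: "nat \<Rightarrow> (real \<Rightarrow> real) \<Rightarrow> real \<Rightarrow> real \<Rightarrow> real" where
  "fdiff m f t x = (\<Sum>j=0..m. real (m choose j) * (-1) ^ (m - j) * f (x + real j * t))"

definition modsmooth :: "nat \<Rightarrow> (real \<Rightarrow> real) \<Rightarrow> real \<Rightarrow> real" where
  "modsmooth m f \<delta> = (SUP t\<in>{-\<delta>..\<delta>}. supnorm (fdiff m f t))"

definition LipStar :: "real \<Rightarrow> (real \<Rightarrow> real) \<Rightarrow> bool" where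
  "LipStar \<alpha> f \<longleftrightarrow> bucont f \<and>
     (\<lambda>\<delta>. modsmooth (nat \<lfloor>\<alpha>\<rfloor> + 1) f \<delta>) \<in> O[at_right 0](\<lambda>\<delta>. \<delta> powr \<alpha>)"

end

theory Submission
  imports Defs
begin

lemma sum_bound:
  fixes a b :: "'a \<Rightarrow> real"
  assumes "b summable_on A" "\<And>k. k \<in> A \<Longrightarrow> \<bar>a k\<bar> \<le> b k"
  shows "a summable_on A" "\<bar>infsum a A\<bar> \<le> infsum b A"
proof -
  have n: "(\<lambda>k. norm (a k)) summable_on A"
    by (rule summable_on_comparison_test[OF assms(1)]) (use assms(2) in auto)
  then show "a summable_on A" using summable_on_iff_abs_summable_on_real by blast
  have "\<bar>infsum a A\<bar> \<le> infsum (\<lambda>k. norm (a k)) A" using norm_infsum_bound[of a A] n by simp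
  also have "\<dots> \<le> infsum b A" by (rule infsum_mono[OF n assms(1)]) (use assms(2) in auto)
  finally show "\<bar>infsum a A\<bar> \<le> infsum b A" .
qed

lemma powr_int_summable:
  fixes s :: real assumes "s > 1"
  shows "(\<lambda>i::int. (1 + \<bar>real_of_int i\<bar>) powr (-s)) summable_on UNIV"
proof -
  let ?g = "\<lambda>i::int. (1 + \<bar>real_of_int i\<bar>) powr (-s)"
  have "summable (\<lambda>n. real n powr (-s))" using assms by (subst summable_real_powr_iff) auto
  hence s1: "summable (\<lambda>n. real (Suc n) powr (-s))" by (subst summable_Suc_iff)
  have h1: "(\<lambda>n. real (Suc n) powr (-s)) summable_on UNIV"
    using sums_nonneg_imp_has_sum[OF summable_sums[OF s1]] unfolding summable_on_def by auto
  have A: "?g summable_on (int ` UNIV)"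
    by (subst summable_on_reindex) (auto simp: o_def intro: summable_on_cong[THEN iffD1, OF _ h1] simp add: add.commute)
  have h2: "(\<lambda>n. real (Suc (Suc n)) powr (-s)) summable_on UNIV"
    by (rule summable_on_comparison_test[OF h1]) (use assms in \<open>auto intro!: powr_mono2'\<close>)
  have B: "?g summable_on ((\<lambda>n. - int n - 1) ` UNIV)"
    apply (subst summable_on_reindex) apply (auto simp: inj_on_def o_def)
    apply (rule summable_on_cong[THEN iffD1, OF _ h2]) apply (auto simp: add.commute)
    done
  have U: "int ` UNIV \<union> (\<lambda>n. - int n - 1) ` UNIV = (UNIV::int set)"
  proof -
    { fix i :: int have "i \<in> int ` UNIV \<union> (\<lambda>n. - int n - 1) ` UNIV"
      proof (cases "i \<ge> 0")
        case True then show ?thesis by (auto intro!: image_eqI[of _ _ "nat i"])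
      next
        case False then show ?thesis by (auto intro!: image_eqI[of _ _ "nat (-i-1)"])
      qed }
    thus ?thesis by auto
  qed
  have "?g summable_on (int ` UNIV \<union> (\<lambda>n. - int n - 1) ` UNIV)"
    by (rule summable_on_Un_disjoint[OF A B]) auto
  thus ?thesis using U by simp
qed

lemma powr_int_shift_bound:
  fixes s :: real assumes "s > 1"
  obtains S where "S \<ge> 0" "\<And>u. (\<lambda>k::int. (1 + \<bar>u - real_of_int k\<bar>) powr (-s)) summable_on UNIV"
    "\<And>u. infsum (\<lambda>k::int. (1 + \<bar>u - real_of_int k\<bar>) powr (-s)) UNIV \<le> S"
proof -
  let ?g = "\<lambda>i::int. (1 + \<bar>real_of_int i\<bar>) powr (-s)"
  have gs: "?g summable_on UNIV" by (rule powr_int_summable[OF assms])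
  define S where "S = 2 powr s * infsum ?g UNIV"
  have key: "(\<lambda>k::int. (1 + \<bar>u - real_of_int k\<bar>) powr (-s)) summable_on UNIV \<and>
     infsum (\<lambda>k::int. (1 + \<bar>u - real_of_int k\<bar>) powr (-s)) UNIV \<le> S" for u
  proof -
    define n where "n = \<lfloor>u\<rfloor>"
    let ?h = "\<lambda>k::int. 2 powr s * ?g (k - n)"
    have inj: "inj (\<lambda>i::int. i + n)" by (auto simp: inj_on_def)
    have im: "range (\<lambda>i::int. i + n) = UNIV" by (auto intro!: image_eqI[of _ _ "_ - n"])
    have "(\<lambda>k. ?g (k - n)) summable_on range (\<lambda>i::int. i + n)"
      by (subst summable_on_reindex[OF inj]) (simp add: o_def gs)
    hence hs0: "(\<lambda>k. ?g (k - n)) summable_on UNIV" using im by simp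
    have "infsum (\<lambda>k. ?g (k - n)) (range (\<lambda>i::int. i + n)) = infsum ((\<lambda>k. ?g (k - n)) \<circ> (\<lambda>i::int. i + n)) UNIV"
      by (rule infsum_reindex[OF inj])
    also have "\<dots> = infsum ?g UNIV" by (simp add: o_def)
    finally have hi0: "infsum (\<lambda>k. ?g (k - n)) UNIV = infsum ?g UNIV" using im by simp
    have hs: "?h summable_on UNIV" by (rule summable_on_cmult_right[OF hs0])
    have hi: "infsum ?h UNIV = S" unfolding S_def by (simp only: infsum_cmult_right[OF hs0] hi0)
    have le: "\<bar>(1 + \<bar>u - real_of_int k\<bar>) powr (-s)\<bar> \<le> ?h k" for k
    proof -
      have f1: "u - 1 < real_of_int n" "real_of_int n \<le> u" unfolding n_def by linarith+
      have a: "1 + \<bar>real_of_int (k - n)\<bar> \<le> 2 * (1 + \<bar>u - real_of_int k\<bar>)" using f1 by (simp add: abs_if)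
      have "(2 * (1 + \<bar>u - real_of_int k\<bar>)) powr (-s) \<le> (1 + \<bar>real_of_int (k - n)\<bar>) powr (-s)"
        by (rule powr_mono2'[OF _ _ a]) (use assms in auto)
      moreover have "(2 * (1 + \<bar>u - real_of_int k\<bar>)) powr (-s) = 2 powr (-s) * (1 + \<bar>u - real_of_int k\<bar>) powr (-s)"
        by (rule powr_mult)
      ultimately have "2 powr (-s) * (1 + \<bar>u - real_of_int k\<bar>) powr (-s) \<le> ?g (k - n)"
        by linarith
      hence "2 powr s * (2 powr (-s) * (1 + \<bar>u - real_of_int k\<bar>) powr (-s)) \<le> ?h k"
        by (intro mult_left_mono) auto
      moreover have "2 powr s * (2 powr (-s) * (1 + \<bar>u - real_of_int k\<bar>) powr (-s)) = (1 + \<bar>u - real_of_int k\<bar>) powr (-s)"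
        by (simp add: powr_minus field_simps)
      ultimately show ?thesis by simp
    qed
    show ?thesis using sum_bound[OF hs, of "\<lambda>k. (1 + \<bar>u - real_of_int k\<bar>) powr (-s)"] le hi
      by auto
  qed
  have "S \<ge> 0" unfolding S_def by (intro mult_nonneg_nonneg infsum_nonneg) auto
  with key show ?thesis using that by blast
qed

lemma tail_integrable:
  fixes e R :: real assumes "e < -1" "R > 0"
  shows "integrable lborel (\<lambda>v. indicator {R..} v * v powr e)"
proof -
  have hi: "((\<lambda>x. x powr e) has_integral -(R powr (e+1)) / (e+1)) {R..}"
    by (rule has_integral_powr_to_inf[OF assms])
  have nn: "integral\<^sup>N lborel (\<lambda>x. ennreal (indicator {R..} x * x powr e)) = ennreal (-(R powr (e+1)) / (e+1))"
    by (rule nn_integral_has_integral_lebesgue[OF _ hi]) auto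
  show ?thesis
    by (rule integrableI_nn_integral_finite[OF _ _ nn]) auto
qed

locale kern =
  fixes r :: nat and \<phi> \<psi> :: "real \<Rightarrow> real" and \<theta> :: real
  assumes r2: "r \<ge> 2" and dk: "discrete_kernel \<phi>" and ck: "continuous_kernel \<psi>"
    and ci: "cond_i r \<phi>" and cii: "cond_ii r \<phi> \<psi>" and th: "\<theta> > real r + 1"
    and tp: "cond_Theta \<theta> \<phi>" and tq: "cond_Theta \<theta> \<psi>"
begin

lemma phi_decay: obtains C where "C \<ge> 0" "\<And>t. \<bar>\<phi> t\<bar> \<le> C * (1 + \<bar>t\<bar>) powr (-\<theta>)"
proof -
  obtain B where B: "\<And>t. \<bar>\<phi> t\<bar> \<le> B" using dk unfolding discrete_kernel_def bounded_iff by auto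
  have B0: "B \<ge> 0" using B[of 0] by linarith
  from tp obtain c where c: "c > 0" "eventually (\<lambda>t. norm (\<phi> t) \<le> c * norm (\<bar>t\<bar> powr -\<theta>)) at_infinity"
    unfolding cond_Theta_def by (elim landau_o.bigE)
  then obtain b where b: "\<And>t. b \<le> norm t \<Longrightarrow> \<bar>\<phi> t\<bar> \<le> c * \<bar>t\<bar> powr -\<theta>"
    by (auto simp: eventually_at_infinity)
  define b' where "b' = max b 1"
  define C where "C = max (c * 2 powr \<theta>) (B * (1 + b') powr \<theta>)"
  have "\<bar>\<phi> t\<bar> \<le> C * (1 + \<bar>t\<bar>) powr (-\<theta>)" for t
  proof (cases "\<bar>t\<bar> \<ge> b'")
    case True
    have t1: "\<bar>t\<bar> \<ge> 1" using True unfolding b'_def by auto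
    have "(2 * \<bar>t\<bar>) powr (-\<theta>) \<le> (1 + \<bar>t\<bar>) powr (-\<theta>)"
      by (rule powr_mono2') (use th t1 in auto)
    hence "2 powr (-\<theta>) * \<bar>t\<bar> powr (-\<theta>) \<le> (1 + \<bar>t\<bar>) powr (-\<theta>)" by (simp add: powr_mult)
    hence "2 powr \<theta> * (2 powr (-\<theta>) * \<bar>t\<bar> powr (-\<theta>)) \<le> 2 powr \<theta> * (1 + \<bar>t\<bar>) powr (-\<theta>)"
      by (intro mult_left_mono) auto
    hence "\<bar>t\<bar> powr (-\<theta>) \<le> 2 powr \<theta> * (1 + \<bar>t\<bar>) powr (-\<theta>)" by (simp add: powr_minus field_simps)
    hence "\<bar>\<phi> t\<bar> \<le> c * (2 powr \<theta> * (1 + \<bar>t\<bar>) powr (-\<theta>))"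
      using b[of t] True c(1) unfolding b'_def by (smt (verit) mult_left_mono real_norm_def)
    also have "\<dots> \<le> C * (1 + \<bar>t\<bar>) powr (-\<theta>)" unfolding C_def
      by (simp add: mult.assoc[symmetric] mult_right_mono)
    finally show ?thesis .
  next
    case False
    have "(1 + b') powr (-\<theta>) \<le> (1 + \<bar>t\<bar>) powr (-\<theta>)"
      by (rule powr_mono2') (use th False b'_def in auto)
    hence "B * ((1 + b') powr \<theta> * (1 + b') powr (-\<theta>)) \<le> B * ((1 + b') powr \<theta> * (1 + \<bar>t\<bar>) powr (-\<theta>))"
      using B0 by (intro mult_left_mono) auto
    moreover have "(1 + b') powr \<theta> * (1 + b') powr (-\<theta>) = 1" unfolding b'_def by (simp add: powr_minus)
    ultimately have "B \<le> B * (1 + b') powr \<theta> * (1 + \<bar>t\<bar>) powr (-\<theta>)" by (simp add: mult.assoc)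
    also have "\<dots> \<le> C * (1 + \<bar>t\<bar>) powr (-\<theta>)" unfolding C_def by (simp add: mult_right_mono)
    finally show ?thesis using B[of t] by linarith
  qed
  moreover have "C \<ge> 0" unfolding C_def by (rule order.trans[OF _ max.cobounded1]) (use c in auto)
  ultimately show ?thesis using that by blast
qed

lemma psi_tail: obtains R C where "R \<ge> 1" "C \<ge> 0" "\<And>t. R \<le> \<bar>t\<bar> \<Longrightarrow> \<bar>\<psi> t\<bar> \<le> C * \<bar>t\<bar> powr (-\<theta>)"
proof -
  from tq obtain c where c: "c > 0" "eventually (\<lambda>t. norm (\<psi> t) \<le> c * norm (\<bar>t\<bar> powr -\<theta>)) at_infinity"
    unfolding cond_Theta_def by (elim landau_o.bigE)
  then obtain b where b: "\<And>t. b \<le> norm t \<Longrightarrow> \<bar>\<psi> t\<bar> \<le> c * \<bar>t\<bar> powr -\<theta>"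
    by (auto simp: eventually_at_infinity)
  show ?thesis by (rule that[of "max b 1" c]) (use b c in auto)
qed

lemma s_gt1: "\<theta> - real r > 1" using th by simp

lemma phi_mom: obtains A where "A \<ge> 0"
  "\<And>j u. j \<le> r \<Longrightarrow> (\<lambda>k::int. \<bar>\<phi> (u - real_of_int k)\<bar> * \<bar>real_of_int k - u\<bar> ^ j) summable_on UNIV"
  "\<And>j u. j \<le> r \<Longrightarrow> infsum (\<lambda>k::int. \<bar>\<phi> (u - real_of_int k)\<bar> * \<bar>real_of_int k - u\<bar> ^ j) UNIV \<le> A"
proof -
  obtain C where C: "C \<ge> 0" "\<And>t. \<bar>\<phi> t\<bar> \<le> C * (1 + \<bar>t\<bar>) powr (-\<theta>)" using phi_decay by blast
  obtain S where S: "S \<ge> 0" "\<And>u. (\<lambda>k::int. (1 + \<bar>u - real_of_int k\<bar>) powr (-(\<theta> - real r))) summable_on UNIV"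
    "\<And>u. infsum (\<lambda>k::int. (1 + \<bar>u - real_of_int k\<bar>) powr (-(\<theta> - real r))) UNIV \<le> S"
    by (metis powr_int_shift_bound[OF s_gt1])
  have bd: "\<bar>\<bar>\<phi> (u - real_of_int k)\<bar> * \<bar>real_of_int k - u\<bar> ^ j\<bar> \<le> C * (1 + \<bar>u - real_of_int k\<bar>) powr (-(\<theta> - real r))"
    if "j \<le> r" for j u k
  proof -
    let ?x = "1 + \<bar>u - real_of_int k\<bar>"
    have x1: "?x \<ge> 1" by simp
    have "\<bar>real_of_int k - u\<bar> ^ j \<le> ?x ^ j" by (rule power_mono) auto
    also have "\<dots> = ?x powr (real j)" using x1 by (simp add: powr_realpow)
    finally have p: "\<bar>real_of_int k - u\<bar> ^ j \<le> ?x powr (real j)" .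
    have "\<bar>\<bar>\<phi> (u - real_of_int k)\<bar> * \<bar>real_of_int k - u\<bar> ^ j\<bar> = \<bar>\<phi> (u - real_of_int k)\<bar> * \<bar>real_of_int k - u\<bar> ^ j"
      by simp
    also have "\<dots> \<le> (C * ?x powr (-\<theta>)) * ?x powr (real j)"
      by (rule mult_mono[OF C(2) p]) (use C in auto)
    also have "\<dots> = C * ?x powr (real j - \<theta>)" by (simp add: powr_add[symmetric] mult.assoc)
    also have "\<dots> \<le> C * ?x powr (-(\<theta> - real r))"
      by (intro mult_left_mono powr_mono) (use that C in auto)
    finally show ?thesis .
  qed
  let ?A = "C * S"
  have "(\<lambda>k::int. \<bar>\<phi> (u - real_of_int k)\<bar> * \<bar>real_of_int k - u\<bar> ^ j) summable_on UNIV \<and>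
        infsum (\<lambda>k::int. \<bar>\<phi> (u - real_of_int k)\<bar> * \<bar>real_of_int k - u\<bar> ^ j) UNIV \<le> ?A" if "j \<le> r" for j u
  proof -
    have ms: "(\<lambda>k::int. C * (1 + \<bar>u - real_of_int k\<bar>) powr (-(\<theta> - real r))) summable_on UNIV"
      by (rule summable_on_cmult_right[OF S(2)])
    note sb = sum_bound[OF ms, of "\<lambda>k. \<bar>\<phi> (u - real_of_int k)\<bar> * \<bar>real_of_int k - u\<bar> ^ j", OF bd[OF that]]
    have "infsum (\<lambda>k::int. C * (1 + \<bar>u - real_of_int k\<bar>) powr (-(\<theta> - real r))) UNIV \<le> C * S"
      by (simp only: infsum_cmult_right[OF S(2)]) (intro mult_left_mono S(3) C(1))
    with sb show ?thesis by linarith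
  qed
  moreover have "?A \<ge> 0" using C S by simp
  ultimately show ?thesis using that by blast
qed

lemma phi_mom_summable:
  assumes "j \<le> r"
  shows "(\<lambda>k::int. \<phi> (u - real_of_int k) * (real_of_int k - u) ^ j) summable_on UNIV"
proof -
  obtain A where A: "\<And>j u. j \<le> r \<Longrightarrow> (\<lambda>k::int. \<bar>\<phi> (u - real_of_int k)\<bar> * \<bar>real_of_int k - u\<bar> ^ j) summable_on UNIV"
    using phi_mom by metis
  show ?thesis by (rule sum_bound(1)[OF A[of j u, OF assms]]) (simp add: abs_mult power_abs)
qed

lemma psi_int: "integrable lborel \<psi>" using ck unfolding continuous_kernel_def by auto

lemma psi_meas[measurable]: "\<psi> \<in> borel_measurable borel"
  using borel_measurable_integrable[OF psi_int] by simp

lemma psi_mom_abs: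
  assumes "j \<le> r"
  shows "integrable lborel (\<lambda>v. \<bar>v\<bar> ^ j * \<bar>\<psi> v\<bar>)"
proof -
  obtain R C where RC: "R \<ge> 1" "C \<ge> 0" "\<And>t. R \<le> \<bar>t\<bar> \<Longrightarrow> \<bar>\<psi> t\<bar> \<le> C * \<bar>t\<bar> powr (-\<theta>)"
    using psi_tail by blast
  define T where "T = (\<lambda>v. indicator {R..} v * v powr (real j - \<theta>))"
  have Ti: "integrable lborel T" unfolding T_def
    by (rule tail_integrable) (use th assms RC in auto)
  have Ti2: "integrable lborel (\<lambda>v. T (0 + (-1) * v))"
    by (rule lborel_integrable_real_affine[OF Ti]) simp
  define M where "M = (\<lambda>v. R ^ j * \<bar>\<psi> v\<bar> + C * (T v + T (0 + (-1) * v)))"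
  have Mi: "integrable lborel M" unfolding M_def
    using Ti Ti2 psi_int by (intro Bochner_Integration.integrable_add Bochner_Integration.integrable_mult_right Bochner_Integration.integrable_abs) auto
  have T0: "T v \<ge> 0" for v unfolding T_def by (auto simp: indicator_def)
  show ?thesis
  proof (rule Bochner_Integration.integrable_bound[OF Mi])
    show "(\<lambda>v. \<bar>v\<bar> ^ j * \<bar>\<psi> v\<bar>) \<in> borel_measurable lborel" by measurable
    show "AE x in lborel. norm (\<bar>x\<bar> ^ j * \<bar>\<psi> x\<bar>) \<le> norm (M x)"
    proof (rule AE_I2)
      fix v :: real
      have "\<bar>v\<bar> ^ j * \<bar>\<psi> v\<bar> \<le> M v"
      proof (cases "\<bar>v\<bar> \<le> R")
        case True
        have "\<bar>v\<bar> ^ j * \<bar>\<psi> v\<bar> \<le> R ^ j * \<bar>\<psi> v\<bar>"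
          by (intro mult_right_mono power_mono) (use True in auto)
        also have "\<dots> \<le> M v" unfolding M_def using T0[of v] T0[of "0 + (-1) * v"] RC(2) by simp
        finally show ?thesis .
      next
        case False
        hence v0: "\<bar>v\<bar> > 0" using RC by auto
        have "\<bar>v\<bar> ^ j * \<bar>\<psi> v\<bar> \<le> \<bar>v\<bar> powr (real j) * (C * \<bar>v\<bar> powr (-\<theta>))"
          using RC(3)[of v] False v0 by (simp add: powr_realpow mult_left_mono)
        also have "\<dots> = C * \<bar>v\<bar> powr (real j - \<theta>)" by (simp add: powr_add[symmetric])
        also have "\<dots> = C * (T v + T (0 + (-1) * v))"
          unfolding T_def by (cases "v \<ge> 0") (use False RC(1) in \<open>auto simp: indicator_def\<close>)
        also have "\<dots> \<le> M v" unfolding M_def using RC(1) by simp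
        finally show ?thesis .
      qed
      thus "norm (\<bar>v\<bar> ^ j * \<bar>\<psi> v\<bar>) \<le> norm (M v)" by simp
    qed
  qed
qed

lemma psi_mom:
  assumes "j \<le> r"
  shows "integrable lborel (\<lambda>v. v ^ j * \<psi> v)"
  by (rule Bochner_Integration.integrable_bound[OF psi_mom_abs[OF assms]]) (auto simp: abs_mult power_abs)

lemma dmoment0: "dmoment \<phi> 0 u = 1"
  using dk unfolding discrete_kernel_def dmoment_def by (auto intro: infsumI)

lemma cmoment0: "cmoment \<psi> 0 = 1"
  using ck unfolding continuous_kernel_def cmoment_def by simp

end

lemma infsum_sum_fin:
  fixes f :: "'i \<Rightarrow> 'a \<Rightarrow> real"
  assumes "finite I" "\<And>i. i \<in> I \<Longrightarrow> f i summable_on A"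
  shows "(\<lambda>k. \<Sum>i\<in>I. f i k) summable_on A \<and> infsum (\<lambda>k. \<Sum>i\<in>I. f i k) A = (\<Sum>i\<in>I. infsum (f i) A)"
  using assms
proof (induction I rule: finite_induct)
  case empty then show ?case by simp
next
  case (insert i I)
  then have h: "(\<lambda>k. \<Sum>i\<in>I. f i k) summable_on A" "infsum (\<lambda>k. \<Sum>i\<in>I. f i k) A = (\<Sum>i\<in>I. infsum (f i) A)"
    "f i summable_on A" by auto
  show ?case using insert(1,2) h
    by (simp add: summable_on_add infsum_add)
qed

lemma infsum_diff':
  fixes a b :: "'a \<Rightarrow> real" assumes "a summable_on A" "b summable_on A"
  shows "infsum (\<lambda>k. a k - b k) A = infsum a A - infsum b A"
proof -
  have "(\<lambda>k. - b k) summable_on A" using assms(2) by (simp add: summable_on_uminus)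
  from infsum_add[OF assms(1) this] show ?thesis by (simp add: infsum_uminus)
qed

lemma summable_on_diff':
  fixes a b :: "'a \<Rightarrow> real" assumes "a summable_on A" "b summable_on A"
  shows "(\<lambda>k. a k - b k) summable_on A"
proof -
  have "(\<lambda>k. - b k) summable_on A" using assms(2) by (simp add: summable_on_uminus)
  from summable_on_add[OF assms(1) this] show ?thesis by simp
qed

lemma taylor_rem:
  fixes g :: "real \<Rightarrow> real"
  assumes "m > 0" "dif 0 = g" "\<And>i t. i < m \<Longrightarrow> (dif i has_real_derivative dif (Suc i) t) (at t)"
    "\<And>t. \<bar>dif m t\<bar> \<le> M"
  shows "\<bar>g y - (\<Sum>i<m. dif i x / fact i * (y - x) ^ i)\<bar> \<le> M / fact m * \<bar>y - x\<bar> ^ m"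
proof (cases "y = x")
  case True
  have "(\<Sum>i<m. dif i x / fact i * (y - x) ^ i) = (\<Sum>i<m. if i = 0 then g x else 0)"
    using True assms(2) by (intro sum.cong) auto
  also have "\<dots> = g x" using assms(1) by (simp add: sum.delta)
  finally show ?thesis using True assms(1) by (simp add: power_0_left)
next
  case False
  have tay: "\<exists>t. (if y < x then y < t \<and> t < x else x < t \<and> t < y) \<and>
     g y = (\<Sum>i<m. dif i x / fact i * (y - x) ^ i) + dif m t / fact m * (y - x) ^ m"
    by (rule Taylor[of m dif g "min x y" "max x y" x y]) (use assms False in auto)
  then obtain t where t: "g y = (\<Sum>i<m. dif i x / fact i * (y - x) ^ i) + dif m t / fact m * (y - x) ^ m"
    by blast
  have "\<bar>g y - (\<Sum>i<m. dif i x / fact i * (y - x) ^ i)\<bar> = \<bar>dif m t\<bar> / fact m * \<bar>y - x\<bar> ^ m"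
    using t by (simp add: abs_mult power_abs)
  also have "\<dots> \<le> M / fact m * \<bar>y - x\<bar> ^ m"
    by (intro mult_right_mono divide_right_mono assms(4)) auto
  finally show ?thesis .
qed

lemma pow_sum_bound:
  fixes a b :: real
  shows "\<bar>a + b\<bar> ^ m \<le> 2 ^ m * (\<bar>a\<bar> ^ m + \<bar>b\<bar> ^ m)"
proof -
  have "\<bar>a + b\<bar> \<le> 2 * max \<bar>a\<bar> \<bar>b\<bar>" by auto
  hence "\<bar>a + b\<bar> ^ m \<le> (2 * max \<bar>a\<bar> \<bar>b\<bar>) ^ m" by (intro power_mono) auto
  also have "\<dots> = 2 ^ m * max \<bar>a\<bar> \<bar>b\<bar> ^ m" by (simp add: power_mult_distrib)
  also have "max \<bar>a\<bar> \<bar>b\<bar> ^ m \<le> \<bar>a\<bar> ^ m + \<bar>b\<bar> ^ m" by (auto simp: max_def)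
  finally show ?thesis by simp
qed

context kern begin

lemma durr_eq:
  assumes "w > 0"
  shows "durrmeyer \<phi> \<psi> w g x = (\<Sum>\<^sub>\<infinity>k::int. \<phi> (w * x - real_of_int k) * (LINT v|lborel. \<psi> v * g ((v + real_of_int k) / w)))"
  unfolding durrmeyer_def
proof (intro infsum_cong arg_cong2[where f="(*)"] refl)
  fix k :: int
  have "(LINT u|lborel. \<psi> (w * u - real_of_int k) * g u) =
    \<bar>1/w\<bar> *\<^sub>R (LINT v|lborel. \<psi> (w * (real_of_int k / w + (1/w) * v) - real_of_int k) * g (real_of_int k / w + (1/w) * v))"
    by (rule lborel_integral_real_affine) (use assms in simp)
  also have "\<dots> = (1/w) * (LINT v|lborel. \<psi> v * g ((v + real_of_int k) / w))"
    using assms by (simp add: field_simps add.commute)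
  finally show "w * (LINT u|lborel. \<psi> (w * u - real_of_int k) * g u) = (LINT v|lborel. \<psi> v * g ((v + real_of_int k) / w))"
    using assms by simp
qed

lemma cont_meas: fixes g :: "real \<Rightarrow> real" and c w :: real shows "continuous_on UNIV g \<Longrightarrow> (\<lambda>v. g ((v + c) / w)) \<in> borel_measurable borel"
proof -
  assume g: "continuous_on UNIV g"
  have "continuous_on UNIV (\<lambda>x::real. (x + c) / w)" unfolding divide_inverse by (intro continuous_intros)
  hence "continuous_on UNIV (\<lambda>v. g ((v + c) / w))" by (rule continuous_on_compose2[OF g]) auto
  thus ?thesis by (rule borel_measurable_continuous_onI)
qed

lemma inner_int:
  assumes "continuous_on UNIV g" "\<And>y. \<bar>g y\<bar> \<le> B"
  shows "integrable lborel (\<lambda>v. \<psi> v * g ((v + c) / w))"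
proof (rule Bochner_Integration.integrable_bound)
  have B0: "B \<ge> 0" using assms(2)[of 0] by linarith
  show "integrable lborel (\<lambda>v. B * \<bar>\<psi> v\<bar>)" using psi_int by auto
  show "(\<lambda>v. \<psi> v * g ((v + c) / w)) \<in> borel_measurable lborel"
    using cont_meas[OF assms(1), of c w] by simp
  show "AE x in lborel. norm (\<psi> x * g ((x + c) / w)) \<le> norm (B * \<bar>\<psi> x\<bar>)"
  proof (rule AE_I2)
    fix x
    have "\<bar>\<psi> x * g ((x + c) / w)\<bar> \<le> \<bar>\<psi> x\<bar> * B" unfolding abs_mult by (intro mult_left_mono assms(2)) auto
    also have "\<dots> \<le> norm (B * \<bar>\<psi> x\<bar>)" using B0 by (simp add: abs_mult)
    finally show "norm (\<psi> x * g ((x + c) / w)) \<le> norm (B * \<bar>\<psi> x\<bar>)" by simp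
  qed
qed

definition "P0 = (LINT v|lborel. \<bar>\<psi> v\<bar>)"

lemma inner_bound:
  assumes "continuous_on UNIV g" "\<And>y. \<bar>g y\<bar> \<le> B"
  shows "\<bar>LINT v|lborel. \<psi> v * g ((v + c) / w)\<bar> \<le> B * P0"
proof -
  have "\<bar>LINT v|lborel. \<psi> v * g ((v + c) / w)\<bar> \<le> (LINT v|lborel. B * \<bar>\<psi> v\<bar>)"
  proof (rule integral_abs_bound_integral[OF inner_int[OF assms]])
    show "integrable lborel (\<lambda>v. B * \<bar>\<psi> v\<bar>)" using psi_int by auto
    fix x
    show "\<bar>\<psi> x * g ((x + c) / w)\<bar> \<le> B * \<bar>\<psi> x\<bar>" unfolding abs_mult
      using mult_left_mono[OF assms(2), of "\<bar>\<psi> x\<bar>"] by (simp add: mult.commute)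
  qed
  thus ?thesis unfolding P0_def by simp
qed

lemma P0_nonneg: "P0 \<ge> 0" unfolding P0_def by simp

definition "Aphi = (SOME A. A \<ge> 0 \<and> (\<forall>j u. j \<le> r \<longrightarrow>
    (\<lambda>k::int. \<bar>\<phi> (u - real_of_int k)\<bar> * \<bar>real_of_int k - u\<bar> ^ j) summable_on UNIV \<and>
    infsum (\<lambda>k::int. \<bar>\<phi> (u - real_of_int k)\<bar> * \<bar>real_of_int k - u\<bar> ^ j) UNIV \<le> A))"

lemma Aphi_prop: "Aphi \<ge> 0 \<and> (\<forall>j u. j \<le> r \<longrightarrow>
    (\<lambda>k::int. \<bar>\<phi> (u - real_of_int k)\<bar> * \<bar>real_of_int k - u\<bar> ^ j) summable_on UNIV \<and>
    infsum (\<lambda>k::int. \<bar>\<phi> (u - real_of_int k)\<bar> * \<bar>real_of_int k - u\<bar> ^ j) UNIV \<le> Aphi)"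
proof -
  obtain A where A: "A \<ge> 0"
    "\<And>j u. j \<le> r \<Longrightarrow> (\<lambda>k::int. \<bar>\<phi> (u - real_of_int k)\<bar> * \<bar>real_of_int k - u\<bar> ^ j) summable_on UNIV"
    "\<And>j u. j \<le> r \<Longrightarrow> infsum (\<lambda>k::int. \<bar>\<phi> (u - real_of_int k)\<bar> * \<bar>real_of_int k - u\<bar> ^ j) UNIV \<le> A"
    using phi_mom by blast
  have "\<exists>A. A \<ge> 0 \<and> (\<forall>j u. j \<le> r \<longrightarrow>
    (\<lambda>k::int. \<bar>\<phi> (u - real_of_int k)\<bar> * \<bar>real_of_int k - u\<bar> ^ j) summable_on UNIV \<and>
    infsum (\<lambda>k::int. \<bar>\<phi> (u - real_of_int k)\<bar> * \<bar>real_of_int k - u\<bar> ^ j) UNIV \<le> A)"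
    using A by blast
  from someI_ex[OF this] show ?thesis unfolding Aphi_def .
qed

lemma Aphi0: "Aphi \<ge> 0" using Aphi_prop by blast
lemma Aphi_s: "j \<le> r \<Longrightarrow> (\<lambda>k::int. \<bar>\<phi> (u - real_of_int k)\<bar> * \<bar>real_of_int k - u\<bar> ^ j) summable_on UNIV"
  using Aphi_prop by blast
lemma Aphi_i: "j \<le> r \<Longrightarrow> infsum (\<lambda>k::int. \<bar>\<phi> (u - real_of_int k)\<bar> * \<bar>real_of_int k - u\<bar> ^ j) UNIV \<le> Aphi"
  using Aphi_prop by blast

lemma durr_bound:
  assumes w: "w > 0" and g: "continuous_on UNIV g" "\<And>y. \<bar>g y\<bar> \<le> B"
  shows "(\<lambda>k::int. \<phi> (w * x - real_of_int k) * (LINT v|lborel. \<psi> v * g ((v + real_of_int k) / w))) summable_on UNIV \<and>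
     \<bar>durrmeyer \<phi> \<psi> w g x\<bar> \<le> (Aphi * P0) * B"
proof -
    let ?u = "w * x"
    have B0: "B \<ge> 0" using g(2)[of 0] by linarith
    have s0: "(\<lambda>k::int. \<bar>\<phi> (?u - real_of_int k)\<bar>) summable_on UNIV" using Aphi_s[of 0 ?u] by simp
    have i0: "infsum (\<lambda>k::int. \<bar>\<phi> (?u - real_of_int k)\<bar>) UNIV \<le> Aphi" using Aphi_i[of 0 ?u] by simp
    have sb: "(\<lambda>k::int. \<bar>\<phi> (?u - real_of_int k)\<bar> * (B * P0)) summable_on UNIV"
      by (rule summable_on_cmult_left[OF s0])
    have le: "\<bar>\<phi> (?u - real_of_int k) * (LINT v|lborel. \<psi> v * g ((v + real_of_int k) / w))\<bar> \<le> \<bar>\<phi> (?u - real_of_int k)\<bar> * (B * P0)" for k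
      unfolding abs_mult by (rule mult_left_mono[OF inner_bound[OF g]]) simp
    note S = sum_bound[OF sb, of "\<lambda>k. \<phi> (?u - real_of_int k) * (LINT v|lborel. \<psi> v * g ((v + real_of_int k) / w))", OF le]
    have "infsum (\<lambda>k::int. \<bar>\<phi> (?u - real_of_int k)\<bar> * (B * P0)) UNIV = infsum (\<lambda>k::int. \<bar>\<phi> (?u - real_of_int k)\<bar>) UNIV * (B * P0)"
      by (rule infsum_cmult_left[OF s0])
    also have "\<dots> \<le> Aphi * (B * P0)" by (intro mult_right_mono i0 mult_nonneg_nonneg B0 P0_nonneg)
    finally have "infsum (\<lambda>k::int. \<bar>\<phi> (?u - real_of_int k)\<bar> * (B * P0)) UNIV \<le> Aphi * (B * P0)" .
    with S show ?thesis unfolding durr_eq[OF w] by (simp add: mult_ac)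
qed

lemma durr_diff:
  assumes w: "w > 0" and g: "continuous_on UNIV g" "\<And>y. \<bar>g y\<bar> \<le> B"
    and h: "continuous_on UNIV h" "\<And>y. \<bar>h y\<bar> \<le> B'"
  shows "durrmeyer \<phi> \<psi> w (\<lambda>y. g y - h y) x = durrmeyer \<phi> \<psi> w g x - durrmeyer \<phi> \<psi> w h x"
proof -
  have "durrmeyer \<phi> \<psi> w (\<lambda>y. g y - h y) x =
     (\<Sum>\<^sub>\<infinity>k::int. \<phi> (w * x - real_of_int k) * (LINT v|lborel. \<psi> v * g ((v + real_of_int k) / w)) -
        \<phi> (w * x - real_of_int k) * (LINT v|lborel. \<psi> v * h ((v + real_of_int k) / w)))"
    unfolding durr_eq[OF w]
  proof (intro infsum_cong)
    fix k :: int
    have "(LINT v|lborel. \<psi> v * (g ((v + real_of_int k) / w) - h ((v + real_of_int k) / w))) =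
       (LINT v|lborel. \<psi> v * g ((v + real_of_int k) / w) - \<psi> v * h ((v + real_of_int k) / w))"
      by (simp add: algebra_simps)
    also have "\<dots> = (LINT v|lborel. \<psi> v * g ((v + real_of_int k) / w)) - (LINT v|lborel. \<psi> v * h ((v + real_of_int k) / w))"
      by (rule Bochner_Integration.integral_diff[OF inner_int[OF g] inner_int[OF h]])
    finally have e: "(LINT v|lborel. \<psi> v * (g ((v + real_of_int k) / w) - h ((v + real_of_int k) / w))) =
      (LINT v|lborel. \<psi> v * g ((v + real_of_int k) / w)) - (LINT v|lborel. \<psi> v * h ((v + real_of_int k) / w))" .
    show "\<phi> (w * x - real_of_int k) * (LINT v|lborel. \<psi> v * (g ((v + real_of_int k) / w) - h ((v + real_of_int k) / w))) =
      \<phi> (w * x - real_of_int k) * (LINT v|lborel. \<psi> v * g ((v + real_of_int k) / w)) -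
        \<phi> (w * x - real_of_int k) * (LINT v|lborel. \<psi> v * h ((v + real_of_int k) / w))"
      unfolding e by (rule right_diff_distrib)
  qed
  also have "\<dots> = durrmeyer \<phi> \<psi> w g x - durrmeyer \<phi> \<psi> w h x"
    unfolding durr_eq[OF w] by (rule infsum_diff'[OF conjunct1[OF durr_bound[OF w g]] conjunct1[OF durr_bound[OF w h]]])
  finally show ?thesis .
qed

end

definition prim :: "(real \<Rightarrow> real) \<Rightarrow> real \<Rightarrow> real" where
  "prim g = (SOME G. \<forall>x. (G has_real_derivative g x) (at x))"
definition Pop :: "real \<Rightarrow> (real \<Rightarrow> real) \<Rightarrow> real \<Rightarrow> real" where
  "Pop b g x = (prim g (x + b) - prim g x) / b"
definition Eop :: "real \<Rightarrow> (real \<Rightarrow> real) \<Rightarrow> real \<Rightarrow> real" where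
  "Eop b g x = (g (x + b) - g x) / b"

lemma prim_ex:
  assumes "continuous_on UNIV g"
  shows "\<exists>G. \<forall>x. (G has_real_derivative g x) (at x)"
proof -
  have "\<exists>F. \<forall>x::real. (-\<infinity>::ereal) < ereal x \<longrightarrow> ereal x < \<infinity> \<longrightarrow> (F has_vector_derivative g x) (at x)"
    by (rule einterval_antiderivative) (use assms in \<open>auto simp: continuous_on_eq_continuous_at\<close>)
  thus ?thesis by (auto simp: has_real_derivative_iff_has_vector_derivative)
qed

lemma prim_deriv:
  assumes "continuous_on UNIV g"
  shows "(prim g has_real_derivative g x) (at x)"
  using someI_ex[OF prim_ex[OF assms]] unfolding prim_def by blast

lemma Pop_any:
  assumes "continuous_on UNIV g" "\<And>x. (G has_real_derivative g x) (at x)"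
  shows "Pop b g x = (G (x + b) - G x) / b"
proof -
  have "\<forall>y. ((\<lambda>y. prim g y - G y) has_real_derivative 0) (at y)"
    using DERIV_diff[OF prim_deriv[OF assms(1)] assms(2)] by fastforce
  from DERIV_isconst_all[OF this, of "x + b" x]
  show ?thesis unfolding Pop_def by (simp add: algebra_simps)
qed

lemma Pop_deriv:
  assumes "continuous_on UNIV g"
  shows "(Pop b g has_real_derivative Eop b g x) (at x)"
proof -
  have d1: "((\<lambda>x. prim g (x + b)) has_real_derivative g (x + b)) (at x)"
    using DERIV_chain2[OF prim_deriv[OF assms] DERIV_add[OF DERIV_ident DERIV_const[of b]]] by simp
  have "((\<lambda>x. (prim g (x + b) - prim g x) / b) has_real_derivative (g (x + b) - g x) / b) (at x)"
    by (intro DERIV_cdivide DERIV_diff d1 prim_deriv[OF assms])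
  thus ?thesis unfolding Pop_def[abs_def] Eop_def by simp
qed

lemma Pop_cont:
  assumes "continuous_on UNIV g"
  shows "continuous_on UNIV (Pop b g)"
  using Pop_deriv[OF assms] DERIV_isCont continuous_at_imp_continuous_on by blast

lemma Pop_bound:
  assumes "b > 0" "continuous_on UNIV g" "\<And>t. x \<le> t \<Longrightarrow> t \<le> x + b \<Longrightarrow> \<bar>g t\<bar> \<le> B"
  shows "\<bar>Pop b g x\<bar> \<le> B"
proof -
  obtain z where z: "x < z" "z < x + b" "prim g (x + b) - prim g x = (x + b - x) * g z"
    using MVT2[of x "x + b" "prim g" g] prim_deriv[OF assms(2)] assms(1) by auto
  have "Pop b g x = g z" unfolding Pop_def using z assms(1) by simp
  thus ?thesis using assms(3)[of z] z by simp
qed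

lemma Pop_lin:
  assumes "finite J" "\<And>j. j \<in> J \<Longrightarrow> continuous_on UNIV (h j)"
  shows "Pop b (\<lambda>y. \<Sum>j\<in>J. c j * h j y) x = (\<Sum>j\<in>J. c j * Pop b (h j) x)"
proof -
  have cont: "continuous_on UNIV (\<lambda>y. \<Sum>j\<in>J. c j * h j y)"
    using assms(2) by (intro continuous_intros) auto
  have der: "((\<lambda>y. \<Sum>j\<in>J. c j * prim (h j) y) has_real_derivative (\<Sum>j\<in>J. c j * h j y)) (at y)" for y
    by (intro DERIV_sum DERIV_cmult prim_deriv assms(2))
  have "Pop b (\<lambda>y. \<Sum>j\<in>J. c j * h j y) x = ((\<Sum>j\<in>J. c j * prim (h j) (x + b)) - (\<Sum>j\<in>J. c j * prim (h j) x)) / b"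
    by (rule Pop_any[OF cont der])
  also have "\<dots> = (\<Sum>j\<in>J. c j * Pop b (h j) x)"
    unfolding Pop_def by (simp add: sum_subtractf[symmetric] sum_divide_distrib algebra_simps)
  finally show ?thesis .
qed

lemma Pop_const:
  assumes "b \<noteq> 0"
  shows "Pop b (\<lambda>y. c) x = c"
proof -
  have "Pop b (\<lambda>y. c) x = (c * (x + b) - c * x) / b"
    by (rule Pop_any) (auto intro!: derivative_eq_intros)
  thus ?thesis using assms by (simp add: algebra_simps)
qed

lemma Pop_scale:
  assumes "j \<noteq> 0" "continuous_on UNIV h"
  shows "Pop b (\<lambda>u. h (z + j * u)) s = Pop (j * b) h (z + j * s)"
proof -
  have c1: "continuous_on UNIV (\<lambda>u. z + j * u)" by (intro continuous_intros)
  have cont: "continuous_on UNIV (\<lambda>u. h (z + j * u))"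
    by (rule continuous_on_compose2[OF assms(2) c1]) auto
  have der: "((\<lambda>u. prim h (z + j * u) / j) has_real_derivative h (z + j * u)) (at u)" for u
  proof -
    have dl: "((\<lambda>u. z + j * u) has_real_derivative j) (at u)" by (auto intro!: derivative_eq_intros)
    have "((\<lambda>u. prim h (z + j * u)) has_real_derivative h (z + j * u) * j) (at u)"
      by (rule DERIV_chain2[OF prim_deriv[OF assms(2)] dl])
    from DERIV_cdivide[OF this, of j] show ?thesis using assms(1) by simp
  qed
  have "Pop b (\<lambda>u. h (z + j * u)) s = (prim h (z + j * (s + b)) / j - prim h (z + j * s) / j) / b"
    by (rule Pop_any[OF cont der])
  also have "\<dots> = Pop (j * b) h (z + j * s)"
    unfolding Pop_def using assms(1) by (simp add: field_simps)
  finally show ?thesis .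
qed

lemma Pn_cont:
  assumes "continuous_on UNIV g"
  shows "continuous_on UNIV ((Pop b ^^ m) g)"
  by (induction m) (auto intro: Pop_cont assms)

lemma Pn_bound:
  assumes "b > 0" "continuous_on UNIV g" "\<And>t. x \<le> t \<Longrightarrow> t \<le> x + real m * b \<Longrightarrow> \<bar>g t\<bar> \<le> B"
  shows "\<bar>(Pop b ^^ m) g x\<bar> \<le> B"
  using assms(3)
proof (induction m arbitrary: x)
  case 0 then show ?case by simp
next
  case (Suc m)
  show ?case unfolding funpow.simps o_def
  proof (rule Pop_bound[OF assms(1) Pn_cont[OF assms(2)]])
    fix t assume t: "x \<le> t" "t \<le> x + b"
    show "\<bar>(Pop b ^^ m) g t\<bar> \<le> B"
    proof (rule Suc.IH)
      fix t' assume "t \<le> t'" "t' \<le> t + real m * b"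
      then show "\<bar>g t'\<bar> \<le> B" using t by (intro Suc.prems) (auto simp: algebra_simps)
    qed
  qed
qed

lemma Pn_const:
  assumes "b \<noteq> 0"
  shows "(Pop b ^^ m) (\<lambda>y. c) = (\<lambda>y. c)"
  by (induction m) (auto simp: Pop_const[OF assms])

lemma Pn_scale:
  assumes "j \<noteq> 0" "continuous_on UNIV h"
  shows "(Pop b ^^ m) (\<lambda>u. h (z + j * u)) s = (Pop (j * b) ^^ m) h (z + j * s)"
proof (induction m arbitrary: s)
  case 0 then show ?case by simp
next
  case (Suc m)
  have e: "(Pop b ^^ m) (\<lambda>u. h (z + j * u)) = (\<lambda>u. (Pop (j * b) ^^ m) h (z + j * u))"
    using Suc.IH by auto
  show ?case unfolding funpow.simps o_def e
    by (rule Pop_scale[OF assms(1) Pn_cont[OF assms(2)]])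
qed

lemma Pn_lin:
  assumes "finite J" "\<And>j. j \<in> J \<Longrightarrow> continuous_on UNIV (h j)"
  shows "(Pop b ^^ m) (\<lambda>y. \<Sum>j\<in>J. c j * h j y) x = (\<Sum>j\<in>J. c j * (Pop b ^^ m) (h j) x)"
proof (induction m arbitrary: x)
  case 0 then show ?case by simp
next
  case (Suc m)
  have e: "(Pop b ^^ m) (\<lambda>y. \<Sum>j\<in>J. c j * h j y) = (\<lambda>y. \<Sum>j\<in>J. c j * (Pop b ^^ m) (h j) y)"
    using Suc.IH by auto
  show ?case unfolding funpow.simps o_def e
    by (rule Pop_lin[OF assms(1) Pn_cont[OF assms(2)]])
qed

lemma Eop_deriv_iter:
  assumes "\<And>x. (h has_real_derivative h' x) (at x)"
  shows "((Eop b ^^ i) h has_real_derivative (Eop b ^^ i) h' x) (at x)"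
proof (induction i arbitrary: x)
  case 0 then show ?case using assms by simp
next
  case (Suc i)
  have d1: "((\<lambda>x. (Eop b ^^ i) h (x + b)) has_real_derivative (Eop b ^^ i) h' (x + b)) (at x)"
    using DERIV_chain2[OF Suc.IH DERIV_add[OF DERIV_ident DERIV_const[of b]]] by simp
  show ?case unfolding funpow.simps o_def Eop_def[of b "(Eop b ^^ i) h"] Eop_def[of b "(Eop b ^^ i) h'"]
    by (intro DERIV_cdivide DERIV_diff d1 Suc.IH)
qed

definition dfam :: "real \<Rightarrow> nat \<Rightarrow> (real \<Rightarrow> real) \<Rightarrow> nat \<Rightarrow> real \<Rightarrow> real" where
  "dfam b m g i = (Eop b ^^ i) ((Pop b ^^ (m - i)) g)"

lemma dfam_deriv:
  assumes "continuous_on UNIV g" "i < m"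
  shows "(dfam b m g i has_real_derivative dfam b m g (Suc i) x) (at x)"
proof -
  obtain n where n: "m - i = Suc n" "m - Suc i = n" using assms(2) by (metis Suc_diff_Suc)
  have der: "((Pop b ^^ Suc n) g has_real_derivative Eop b ((Pop b ^^ n) g) y) (at y)" for y
    unfolding funpow.simps o_def by (rule Pop_deriv[OF Pn_cont[OF assms(1)]])
  have "((Eop b ^^ i) ((Pop b ^^ Suc n) g) has_real_derivative (Eop b ^^ i) (Eop b ((Pop b ^^ n) g)) x) (at x)"
    by (rule Eop_deriv_iter[OF der])
  moreover have "(Eop b ^^ i) (Eop b ((Pop b ^^ n) g)) = (Eop b ^^ Suc i) ((Pop b ^^ n) g)"
    by (simp only: funpow_Suc_right o_def)
  ultimately show ?thesis unfolding dfam_def n by simp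
qed

lemma dfam0: "dfam b m g 0 = (Pop b ^^ m) g" unfolding dfam_def by simp
lemma dfam_m: "dfam b m g m = (Eop b ^^ m) g" unfolding dfam_def by simp

lemma fdiff_Suc: "fdiff (Suc m) g b x = fdiff m g b (x + b) - fdiff m g b x"
proof -
  let ?t = "\<lambda>j. g (x + real j * b)"
  have A: "fdiff (Suc m) g b x = (-1) ^ Suc m * g x +
      (\<Sum>j=0..m. real (Suc m choose Suc j) * (-1) ^ (m - j) * ?t (Suc j))"
    unfolding fdiff_def by (subst sum.atLeast0_atMost_Suc_shift) simp
  also have "(\<Sum>j=0..m. real (Suc m choose Suc j) * (-1) ^ (m - j) * ?t (Suc j)) =
      (\<Sum>j=0..m. real (m choose j) * (-1) ^ (m - j) * ?t (Suc j)) +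
      (\<Sum>j=0..m. real (m choose Suc j) * (-1) ^ (m - j) * ?t (Suc j))"
    by (simp add: sum.distrib[symmetric] algebra_simps)
  also have "(\<Sum>j=0..m. real (m choose j) * (-1) ^ (m - j) * ?t (Suc j)) = fdiff m g b (x + b)"
    unfolding fdiff_def by (intro sum.cong) (auto simp: algebra_simps)
  finally have A': "fdiff (Suc m) g b x = (-1) ^ Suc m * g x + fdiff m g b (x + b) +
      (\<Sum>j=0..m. real (m choose Suc j) * (-1) ^ (m - j) * ?t (Suc j))" by simp
  have "fdiff m g b x = (\<Sum>j=0..Suc m. real (m choose j) * (-1) ^ (m - j) * ?t j)"
    unfolding fdiff_def by (subst sum.atLeast0_atMost_Suc) simp
  also have "\<dots> = (-1) ^ m * g x + (\<Sum>j=0..m. real (m choose Suc j) * (-1) ^ (m - Suc j) * ?t (Suc j))"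
    by (subst sum.atLeast0_atMost_Suc_shift) simp
  finally have B: "fdiff m g b x = (-1) ^ m * g x + (\<Sum>j=0..m. real (m choose Suc j) * (-1) ^ (m - Suc j) * ?t (Suc j))" .
  have C: "(\<Sum>j=0..m. real (m choose Suc j) * (-1) ^ (m - j) * ?t (Suc j)) =
     - (\<Sum>j=0..m. real (m choose Suc j) * (-1) ^ (m - Suc j) * ?t (Suc j))"
  proof -
    have "real (m choose Suc j) * (-1) ^ (m - j) * ?t (Suc j) = - (real (m choose Suc j) * (-1) ^ (m - Suc j) * ?t (Suc j))"
      if "j \<in> {0..m}" for j
    proof (cases "j < m")
      case True
      then have "m - j = Suc (m - Suc j)" by simp
      then show ?thesis by simp
    next
      case False
      then have "j = m" using that by simp
      then show ?thesis by simp
    qed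
    then show ?thesis by (simp add: sum_negf[symmetric])
  qed
  show ?thesis using A' B C by simp
qed

lemma Eop_fdiff:
  assumes "b \<noteq> 0"
  shows "(Eop b ^^ m) g x = fdiff m g b x / b ^ m"
proof (induction m arbitrary: x)
  case 0 then show ?case unfolding fdiff_def by simp
next
  case (Suc m)
  have "(Eop b ^^ Suc m) g x = Eop b ((Eop b ^^ m) g) x" by simp
  also have "\<dots> = ((Eop b ^^ m) g (x + b) - (Eop b ^^ m) g x) / b" by (rule Eop_def)
  also have "\<dots> = (fdiff m g b (x + b) / b ^ m - fdiff m g b x / b ^ m) / b" by (simp only: Suc.IH)
  also have "\<dots> = fdiff (Suc m) g b x / b ^ Suc m" unfolding fdiff_Suc using assms by (simp add: field_simps)
  finally show ?case .
qed

lemma poly_expand: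
  fixes psi v c w :: real and D :: "nat \<Rightarrow> real"
  shows "psi * (\<Sum>i<m. D i / fact i * ((v + c) / w) ^ i) =
    (\<Sum>i<m. \<Sum>\<nu>=0..i. (D i / fact i / w ^ i * real (i choose \<nu>) * c ^ (i - \<nu>)) * (v ^ \<nu> * psi))"
proof -
  have "psi * (\<Sum>i<m. D i / fact i * ((v + c) / w) ^ i) = (\<Sum>i<m. psi * (D i / fact i * ((v + c) / w) ^ i))"
    by (simp add: sum_distrib_left)
  also have "\<dots> = (\<Sum>i<m. \<Sum>\<nu>=0..i. (D i / fact i / w ^ i * real (i choose \<nu>) * c ^ (i - \<nu>)) * (v ^ \<nu> * psi))"
  proof (rule sum.cong[OF refl])
    fix i
    have "((v + c) / w) ^ i = (\<Sum>\<nu>=0..i. real (i choose \<nu>) * v ^ \<nu> * c ^ (i - \<nu>)) / w ^ i"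
      by (simp add: power_divide binomial_ring atLeast0AtMost)
    hence "psi * (D i / fact i * ((v + c) / w) ^ i) = (psi * (D i / fact i / w ^ i)) * (\<Sum>\<nu>=0..i. real (i choose \<nu>) * v ^ \<nu> * c ^ (i - \<nu>))"
      by simp
    also have "\<dots> = (\<Sum>\<nu>=0..i. (psi * (D i / fact i / w ^ i)) * (real (i choose \<nu>) * v ^ \<nu> * c ^ (i - \<nu>)))"
      by (rule sum_distrib_left)
    also have "\<dots> = (\<Sum>\<nu>=0..i. (D i / fact i / w ^ i * real (i choose \<nu>) * c ^ (i - \<nu>)) * (v ^ \<nu> * psi))"
      by (intro sum.cong refl) (simp only: mult_ac)
    finally show "psi * (D i / fact i * ((v + c) / w) ^ i) = (\<Sum>\<nu>=0..i. (D i / fact i / w ^ i * real (i choose \<nu>) * c ^ (i - \<nu>)) * (v ^ \<nu> * psi))" .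
  qed
  finally show ?thesis .
qed

context kern begin

lemma dm_indep:
  assumes "j \<le> r" shows "dmoment \<phi> j u = dmoment \<phi> j 0"
proof (cases "j = 0")
  case True then show ?thesis by (simp add: dmoment0)
next
  case False
  then have "j \<in> {1..r}" using assms by simp
  then show ?thesis using ci unfolding cond_i_def by blast
qed

lemma poly_coef:
  assumes "i < m" "m \<le> r"
  shows "(\<Sum>\<nu>=0..i. real (i choose \<nu>) * cmoment \<psi> \<nu> * dmoment \<phi> (i - \<nu>) u) = (if i = 0 then 1 else 0)"
proof (cases "i = 0")
  case True then show ?thesis by (simp add: dmoment0 cmoment0)
next
  case False
  have "(\<Sum>\<nu>=0..i. real (i choose \<nu>) * cmoment \<psi> \<nu> * dmoment \<phi> (i - \<nu>) u) =
        (\<Sum>\<nu>=0..i. real (i choose \<nu>) * dmoment \<phi> (i - \<nu>) 0 * cmoment \<psi> \<nu>)"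
  proof (rule sum.cong[OF refl])
    fix \<nu> assume "\<nu> \<in> {0..i}"
    have "dmoment \<phi> (i - \<nu>) u = dmoment \<phi> (i - \<nu>) 0" by (rule dm_indep) (use assms in simp)
    thus "real (i choose \<nu>) * cmoment \<psi> \<nu> * dmoment \<phi> (i - \<nu>) u = real (i choose \<nu>) * dmoment \<phi> (i - \<nu>) 0 * cmoment \<psi> \<nu>"
      by simp
  qed
  also have "\<dots> = 0"
  proof -
    have "i \<in> {1..r-1}" using False assms by simp
    then show ?thesis using cii unfolding cond_ii_def by blast
  qed
  finally show ?thesis using False by simp
qed

definition "Jc m = 2 ^ m / fact m * (Aphi * (LINT v|lborel. \<bar>v\<bar> ^ m * \<bar>\<psi> v\<bar>) + Aphi * P0)"

lemma Jc0: "Jc m \<ge> 0"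
proof -
  have "(LINT v|lborel. \<bar>v\<bar> ^ m * \<bar>\<psi> v\<bar>) \<ge> 0" by (rule integral_nonneg_AE) auto
  then show ?thesis unfolding Jc_def using Aphi0 P0_nonneg by simp
qed

lemma jackson:
  assumes m: "1 \<le> m" "m \<le> r"
    and w: "w > 0" and gc: "continuous_on UNIV g" and gb: "\<And>y. \<bar>g y\<bar> \<le> B" and d0: "dif 0 = g"
    and dd: "\<And>i t. i < m \<Longrightarrow> (dif i has_real_derivative dif (Suc i) t) (at t)"
    and dM: "\<And>t. \<bar>dif m t\<bar> \<le> M"
  shows "\<bar>durrmeyer \<phi> \<psi> w g x - g x\<bar> \<le> Jc m * M / w ^ m"
proof -
  define A where "A = Aphi"
  have A: "A \<ge> 0"
    "\<And>j u. j \<le> r \<Longrightarrow> (\<lambda>k::int. \<bar>\<phi> (u - real_of_int k)\<bar> * \<bar>real_of_int k - u\<bar> ^ j) summable_on UNIV"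
    "\<And>j u. j \<le> r \<Longrightarrow> infsum (\<lambda>k::int. \<bar>\<phi> (u - real_of_int k)\<bar> * \<bar>real_of_int k - u\<bar> ^ j) UNIV \<le> A"
    unfolding A_def using Aphi0 Aphi_s Aphi_i by auto
  define Pm where "Pm = (LINT v|lborel. \<bar>v\<bar> ^ m * \<bar>\<psi> v\<bar>)"
  have Pm0: "Pm \<ge> 0" unfolding Pm_def by (rule integral_nonneg_AE) auto
  show ?thesis
  proof -
    define u where "u = w * x"
    define c where "c = (\<lambda>k::int. real_of_int k - u)"
    define d where "d = (\<lambda>i. dif i x / fact i / w ^ i)"
    define poly where "poly = (\<lambda>(k::int) v. \<Sum>i<m. dif i x / fact i * ((v + c k) / w) ^ i)"
    define rem where "rem = (\<lambda>(k::int) v. g ((v + real_of_int k) / w) - poly k v)"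
    define K where "K = M / fact m / w ^ m * 2 ^ m"
    have M0: "M \<ge> 0" using dM[of 0] by linarith
    have K0: "K \<ge> 0" unfolding K_def using M0 w by simp
    have yx: "(v + real_of_int k) / w - x = (v + c k) / w" for v k
      unfolding c_def u_def using w by (simp add: field_simps)
    have rem_bound: "\<bar>rem k v\<bar> \<le> M / fact m * \<bar>(v + c k) / w\<bar> ^ m" for k v
      using taylor_rem[of m dif g M "(v + real_of_int k) / w" x, OF _ d0 dd dM] m
      unfolding rem_def poly_def yx by simp
    have poly_pt: "\<psi> v * poly k v = (\<Sum>i<m. \<Sum>\<nu>=0..i. (d i * real (i choose \<nu>) * c k ^ (i - \<nu>)) * (v ^ \<nu> * \<psi> v))" for k v
      unfolding poly_def d_def by (rule poly_expand)
    have IP: "integrable lborel (\<lambda>v. \<psi> v * poly k v)" for k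
      unfolding poly_pt using m
      by (intro Bochner_Integration.integrable_sum Bochner_Integration.integrable_mult_right psi_mom) auto
    have IPv: "(LINT v|lborel. \<psi> v * poly k v) = (\<Sum>i<m. \<Sum>\<nu>=0..i. (d i * real (i choose \<nu>) * c k ^ (i - \<nu>)) * cmoment \<psi> \<nu>)" for k
    proof -
      have "(LINT v|lborel. \<psi> v * poly k v) = (\<Sum>i<m. (LINT v|lborel. (\<Sum>\<nu>=0..i. (d i * real (i choose \<nu>) * c k ^ (i - \<nu>)) * (v ^ \<nu> * \<psi> v))))"
        unfolding poly_pt using m
        by (intro Bochner_Integration.integral_sum Bochner_Integration.integrable_sum Bochner_Integration.integrable_mult_right psi_mom) auto
      also have "\<dots> = (\<Sum>i<m. \<Sum>\<nu>=0..i. (d i * real (i choose \<nu>) * c k ^ (i - \<nu>)) * cmoment \<psi> \<nu>)"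
      proof (rule sum.cong[OF refl])
        fix i assume i: "i \<in> {..<m}"
        have "(LINT v|lborel. (\<Sum>\<nu>=0..i. (d i * real (i choose \<nu>) * c k ^ (i - \<nu>)) * (v ^ \<nu> * \<psi> v))) =
              (\<Sum>\<nu>=0..i. (LINT v|lborel. (d i * real (i choose \<nu>) * c k ^ (i - \<nu>)) * (v ^ \<nu> * \<psi> v)))"
          using i m by (intro Bochner_Integration.integral_sum Bochner_Integration.integrable_mult_right psi_mom) auto
        also have "\<dots> = (\<Sum>\<nu>=0..i. (d i * real (i choose \<nu>) * c k ^ (i - \<nu>)) * cmoment \<psi> \<nu>)"
          unfolding cmoment_def by simp
        finally show "(LINT v|lborel. (\<Sum>\<nu>=0..i. (d i * real (i choose \<nu>) * c k ^ (i - \<nu>)) * (v ^ \<nu> * \<psi> v))) =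
              (\<Sum>\<nu>=0..i. (d i * real (i choose \<nu>) * c k ^ (i - \<nu>)) * cmoment \<psi> \<nu>)" .
      qed
      finally show ?thesis .
    qed
    have IG: "integrable lborel (\<lambda>v. \<psi> v * g ((v + real_of_int k) / w))" for k
      by (rule inner_int[OF gc gb])
    have split: "\<psi> v * g ((v + real_of_int k) / w) = \<psi> v * poly k v + \<psi> v * rem k v" for k v
      unfolding rem_def by (simp add: algebra_simps)
    have IR: "integrable lborel (\<lambda>v. \<psi> v * rem k v)" for k
    proof -
      have "integrable lborel (\<lambda>v. \<psi> v * g ((v + real_of_int k) / w) - \<psi> v * poly k v)"
        using IG IP by auto
      thus ?thesis by (simp add: split)
    qed
    have Isplit: "(LINT v|lborel. \<psi> v * g ((v + real_of_int k) / w)) = (LINT v|lborel. \<psi> v * poly k v) + (LINT v|lborel. \<psi> v * rem k v)" for k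
      unfolding split by (rule Bochner_Integration.integral_add[OF IP IR])
    have Ibound: "\<bar>LINT v|lborel. \<psi> v * rem k v\<bar> \<le> K * (Pm + \<bar>c k\<bar> ^ m * P0)" for k
    proof -
      have maj: "integrable lborel (\<lambda>v. K * (\<bar>v\<bar> ^ m * \<bar>\<psi> v\<bar> + \<bar>c k\<bar> ^ m * \<bar>\<psi> v\<bar>))"
        using psi_mom_abs[OF m(2)] psi_int by auto
      have "\<bar>LINT v|lborel. \<psi> v * rem k v\<bar> \<le> (LINT v|lborel. K * (\<bar>v\<bar> ^ m * \<bar>\<psi> v\<bar> + \<bar>c k\<bar> ^ m * \<bar>\<psi> v\<bar>))"
      proof (rule integral_abs_bound_integral[OF IR maj])
        fix v
        have "\<bar>\<psi> v * rem k v\<bar> \<le> \<bar>\<psi> v\<bar> * (M / fact m * \<bar>(v + c k) / w\<bar> ^ m)"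
          unfolding abs_mult by (intro mult_left_mono rem_bound) auto
        also have "\<dots> = \<bar>\<psi> v\<bar> * (M / fact m / w ^ m) * \<bar>v + c k\<bar> ^ m"
          using w by (simp add: power_divide)
        also have "\<dots> \<le> \<bar>\<psi> v\<bar> * (M / fact m / w ^ m) * (2 ^ m * (\<bar>v\<bar> ^ m + \<bar>c k\<bar> ^ m))"
          by (intro mult_left_mono pow_sum_bound mult_nonneg_nonneg) (use M0 w in auto)
        also have "\<dots> = K * (\<bar>v\<bar> ^ m * \<bar>\<psi> v\<bar> + \<bar>c k\<bar> ^ m * \<bar>\<psi> v\<bar>)"
          unfolding K_def by (simp add: algebra_simps)
        finally show "\<bar>\<psi> v * rem k v\<bar> \<le> K * (\<bar>v\<bar> ^ m * \<bar>\<psi> v\<bar> + \<bar>c k\<bar> ^ m * \<bar>\<psi> v\<bar>)" .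
      qed
      also have "\<dots> = K * (Pm + \<bar>c k\<bar> ^ m * P0)"
        unfolding Pm_def P0_def using psi_mom_abs[OF m(2)] psi_int by simp
      finally show ?thesis .
    qed
    define S1 where "S1 = (\<lambda>k::int. \<phi> (u - real_of_int k) * (LINT v|lborel. \<psi> v * poly k v))"
    define S2 where "S2 = (\<lambda>k::int. \<phi> (u - real_of_int k) * (LINT v|lborel. \<psi> v * rem k v))"
    define coef where "coef = (\<lambda>i \<nu>. d i * real (i choose \<nu>) * cmoment \<psi> \<nu>)"
    have S1e: "S1 k = (\<Sum>i<m. \<Sum>\<nu>=0..i. coef i \<nu> * (\<phi> (u - real_of_int k) * (real_of_int k - u) ^ (i - \<nu>)))" for k
      unfolding S1_def IPv coef_def c_def by (simp add: sum_distrib_left mult_ac)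
    have inner_s: "(\<lambda>k::int. \<Sum>\<nu>=0..i. coef i \<nu> * (\<phi> (u - real_of_int k) * (real_of_int k - u) ^ (i - \<nu>))) summable_on UNIV \<and>
       infsum (\<lambda>k::int. \<Sum>\<nu>=0..i. coef i \<nu> * (\<phi> (u - real_of_int k) * (real_of_int k - u) ^ (i - \<nu>))) UNIV =
       (\<Sum>\<nu>=0..i. coef i \<nu> * dmoment \<phi> (i - \<nu>) u)" if i: "i < m" for i
    proof -
      have sm: "(\<lambda>k::int. coef i \<nu> * (\<phi> (u - real_of_int k) * (real_of_int k - u) ^ (i - \<nu>))) summable_on UNIV" for \<nu>
        by (rule summable_on_cmult_right[OF phi_mom_summable]) (use i m in auto)
      note r = infsum_sum_fin[of "{0..i}" "\<lambda>\<nu> k. coef i \<nu> * (\<phi> (u - real_of_int k) * (real_of_int k - u) ^ (i - \<nu>))" UNIV, OF _ sm]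
      have "infsum (\<lambda>k::int. coef i \<nu> * (\<phi> (u - real_of_int k) * (real_of_int k - u) ^ (i - \<nu>))) UNIV = coef i \<nu> * dmoment \<phi> (i - \<nu>) u" for \<nu>
        unfolding dmoment_def by (rule infsum_cmult_right[OF phi_mom_summable]) (use i m in auto)
      with r show ?thesis by simp
    qed
    have S1s: "S1 summable_on UNIV" and S1v: "infsum S1 UNIV = g x"
    proof -
      note r = infsum_sum_fin[of "{..<m}" "\<lambda>i k. \<Sum>\<nu>=0..i. coef i \<nu> * (\<phi> (u - real_of_int k) * (real_of_int k - u) ^ (i - \<nu>))" UNIV]
      have S1f: "S1 = (\<lambda>k. \<Sum>i<m. \<Sum>\<nu>=0..i. coef i \<nu> * (\<phi> (u - real_of_int k) * (real_of_int k - u) ^ (i - \<nu>)))"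
        using S1e by auto
      show "S1 summable_on UNIV" unfolding S1f using r inner_s by auto
      have "infsum S1 UNIV = (\<Sum>i<m. \<Sum>\<nu>=0..i. coef i \<nu> * dmoment \<phi> (i - \<nu>) u)"
        unfolding S1f using r inner_s by auto
      also have "\<dots> = (\<Sum>i<m. d i * (if i = 0 then 1 else 0))"
      proof (rule sum.cong[OF refl])
        fix i assume i: "i \<in> {..<m}"
        have "(\<Sum>\<nu>=0..i. coef i \<nu> * dmoment \<phi> (i - \<nu>) u) = d i * (\<Sum>\<nu>=0..i. real (i choose \<nu>) * cmoment \<psi> \<nu> * dmoment \<phi> (i - \<nu>) u)"
          unfolding coef_def by (simp add: sum_distrib_left mult_ac)
        also have "\<dots> = d i * (if i = 0 then 1 else 0)" using poly_coef[of i m u] i m by simp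
        finally show "(\<Sum>\<nu>=0..i. coef i \<nu> * dmoment \<phi> (i - \<nu>) u) = d i * (if i = 0 then 1 else 0)" .
      qed
      also have "\<dots> = (\<Sum>i<m. if i = 0 then d i else 0)" by (intro sum.cong) auto
      also have "\<dots> = d 0" using m by (simp add: sum.delta)
      also have "\<dots> = g x" unfolding d_def using d0 by simp
      finally show "infsum S1 UNIV = g x" .
    qed
    define bnd where "bnd = (\<lambda>k::int. (K * Pm) * (\<bar>\<phi> (u - real_of_int k)\<bar> * \<bar>real_of_int k - u\<bar> ^ 0) +
        (K * P0) * (\<bar>\<phi> (u - real_of_int k)\<bar> * \<bar>real_of_int k - u\<bar> ^ m))"
    have bs: "bnd summable_on UNIV" unfolding bnd_def
      using A(2)[of 0 u] A(2)[of m u] m by (intro summable_on_add summable_on_cmult_right) auto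
    have bi: "infsum bnd UNIV \<le> K * Pm * A + K * P0 * A"
    proof -
      have "infsum bnd UNIV = (K * Pm) * infsum (\<lambda>k::int. \<bar>\<phi> (u - real_of_int k)\<bar> * \<bar>real_of_int k - u\<bar> ^ 0) UNIV +
          (K * P0) * infsum (\<lambda>k::int. \<bar>\<phi> (u - real_of_int k)\<bar> * \<bar>real_of_int k - u\<bar> ^ m) UNIV"
        unfolding bnd_def using A(2)[of 0 u] A(2)[of m u] m
        by (subst infsum_add) (auto intro!: summable_on_cmult_right simp: infsum_cmult_right)
      also have "\<dots> \<le> K * Pm * A + K * P0 * A"
        using A(3)[of 0 u] A(3)[of m u] m K0 Pm0 P0_nonneg
        by (intro add_mono mult_left_mono mult_nonneg_nonneg) auto
      finally show ?thesis .
    qed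
    have S2le: "\<bar>S2 k\<bar> \<le> bnd k" for k
    proof -
      have "\<bar>S2 k\<bar> \<le> \<bar>\<phi> (u - real_of_int k)\<bar> * (K * (Pm + \<bar>c k\<bar> ^ m * P0))"
        unfolding S2_def abs_mult by (intro mult_left_mono Ibound) auto
      also have "\<dots> = bnd k" unfolding bnd_def c_def by (simp add: algebra_simps)
      finally show ?thesis .
    qed
    note S2b = sum_bound[OF bs, of S2, OF S2le]
    have Dg: "durrmeyer \<phi> \<psi> w g x = infsum S1 UNIV + infsum S2 UNIV"
    proof -
      have "durrmeyer \<phi> \<psi> w g x = infsum (\<lambda>k. S1 k + S2 k) UNIV"
        unfolding durr_eq[OF w] S1_def S2_def Isplit u_def by (simp add: algebra_simps)
      also have "\<dots> = infsum S1 UNIV + infsum S2 UNIV" by (rule infsum_add[OF S1s S2b(1)])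
      finally show ?thesis .
    qed
    have "\<bar>durrmeyer \<phi> \<psi> w g x - g x\<bar> = \<bar>infsum S2 UNIV\<bar>" using Dg S1v by simp
    also have "\<dots> \<le> K * Pm * A + K * P0 * A" using S2b(2) bi by linarith
    also have "\<dots> = Jc m * M / w ^ m" unfolding K_def Jc_def A_def Pm_def using w by (simp add: field_simps)
    finally show ?thesis .
  qed
qed

end

lemma supnorm_le:
  assumes "\<And>x. \<bar>g x\<bar> \<le> C" shows "\<bar>supnorm g\<bar> \<le> C"
proof -
  have bdd: "bdd_above (range (\<lambda>x. \<bar>g x\<bar>))" by (rule bdd_aboveI[where M=C]) (auto intro: assms)
  have "0 \<le> \<bar>g 0\<bar>" by simp
  also have "\<bar>g 0\<bar> \<le> supnorm g" unfolding supnorm_def by (rule cSUP_upper[OF _ bdd]) simp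
  finally have 0: "0 \<le> supnorm g" .
  have "supnorm g \<le> C" unfolding supnorm_def by (rule cSUP_least) (auto intro: assms)
  with 0 show ?thesis by simp
qed

lemma fdiff_bound:
  assumes "\<And>x. \<bar>f x\<bar> \<le> B"
  shows "\<bar>fdiff m f t x\<bar> \<le> (\<Sum>j=0..m. real (m choose j)) * B"
proof -
  have "\<bar>fdiff m f t x\<bar> \<le> (\<Sum>j=0..m. \<bar>real (m choose j) * (-1) ^ (m - j) * f (x + real j * t)\<bar>)"
    unfolding fdiff_def by (rule sum_abs)
  also have "\<dots> \<le> (\<Sum>j=0..m. real (m choose j) * B)"
    by (intro sum_mono) (auto simp: abs_mult power_abs intro: mult_left_mono assms)
  also have "\<dots> = (\<Sum>j=0..m. real (m choose j)) * B" by (simp add: sum_distrib_right)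
  finally show ?thesis .
qed

lemma fdiff_zero:
  assumes "m \<ge> 1" shows "fdiff m f 0 x = 0"
proof -
  have "(\<Sum>j=0..m. real (m choose j) * (-1) ^ (m - j)) = (1 + (-1::real)) ^ m"
    using binomial_ring[of "1::real" "-1" m] by (simp add: atLeast0AtMost)
  also have "\<dots> = 0" using assms by simp
  finally have s: "(\<Sum>j=0..m. real (m choose j) * (-1) ^ (m - j)) = 0" .
  have "fdiff m f 0 x = (\<Sum>j=0..m. real (m choose j) * (-1) ^ (m - j)) * f x"
    unfolding fdiff_def by (simp add: sum_distrib_right)
  thus ?thesis using s by simp
qed

lemma lip_extract:
  assumes "LipStar \<alpha> f" "\<alpha> > 0" "m = nat \<lfloor>\<alpha>\<rfloor> + 1"
  shows "\<exists>K \<delta>0. K \<ge> 0 \<and> \<delta>0 > 0 \<and> (\<forall>t x. 0 \<le> t \<and> t < \<delta>0 \<longrightarrow> \<bar>fdiff m f t x\<bar> \<le> K * t powr \<alpha>)"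
proof -
  from assms(1) have bc: "bucont f" and O: "(\<lambda>\<delta>. modsmooth m f \<delta>) \<in> O[at_right 0](\<lambda>\<delta>. \<delta> powr \<alpha>)"
    unfolding LipStar_def assms(3) by auto
  obtain Bf where Bf: "\<And>x. \<bar>f x\<bar> \<le> Bf" using bc unfolding bucont_def bounded_iff by auto
  define BD where "BD = (\<Sum>j=0..m. real (m choose j)) * Bf"
  have fb: "\<bar>fdiff m f t x\<bar> \<le> BD" for t x unfolding BD_def by (rule fdiff_bound[OF Bf])
  obtain c where c: "c > 0" "eventually (\<lambda>\<delta>. norm (modsmooth m f \<delta>) \<le> c * norm (\<delta> powr \<alpha>)) (at_right 0)"
    using O by (elim landau_o.bigE)
  then obtain b where b: "b > 0" "\<And>y. y > 0 \<Longrightarrow> y < b \<Longrightarrow> \<bar>modsmooth m f y\<bar> \<le> c * \<bar>y powr \<alpha>\<bar>"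
    by (auto simp: eventually_at_right_field)
  have main: "\<bar>fdiff m f t x\<bar> \<le> c * t powr \<alpha>" if "0 \<le> t" "t < b" for t x
  proof (cases "t = 0")
    case True then show ?thesis using fdiff_zero[of m f x] assms(3) by simp
  next
    case False hence t0: "t > 0" using that by simp
    have bdd1: "bdd_above (range (\<lambda>x. \<bar>fdiff m f t x\<bar>))" by (rule bdd_aboveI[where M=BD]) (auto intro: fb)
    have "\<bar>fdiff m f t x\<bar> \<le> supnorm (fdiff m f t)" unfolding supnorm_def by (rule cSUP_upper[OF _ bdd1]) simp
    also have "\<dots> \<le> modsmooth m f t"
    proof -
      have bdd2: "bdd_above ((\<lambda>t'. supnorm (fdiff m f t')) ` {-t..t})"
      proof (rule bdd_aboveI2)
        fix t' show "supnorm (fdiff m f t') \<le> BD" unfolding supnorm_def by (rule cSUP_least) (auto intro: fb)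
      qed
      show ?thesis unfolding modsmooth_def by (rule cSUP_upper[OF _ bdd2]) (use t0 in auto)
    qed
    also have "\<dots> \<le> c * t powr \<alpha>" using b(2)[OF t0 that(2)] by simp
    finally show ?thesis .
  qed
  show ?thesis using c b main by (intro exI[of _ c] exI[of _ b]) auto
qed

context kern begin

lemma smooth_est:
  assumes m: "1 \<le> m" "m \<le> r" and am: "\<alpha> < real m" "\<alpha> > 0"
    and fc: "continuous_on UNIV f" and fB: "\<And>y. \<bar>f y\<bar> \<le> Bf"
    and K: "K \<ge> 0" and d0: "\<delta>0 > 0" and lip: "\<And>t x. 0 \<le> t \<Longrightarrow> t < \<delta>0 \<Longrightarrow> \<bar>fdiff m f t x\<bar> \<le> K * t powr \<alpha>"
    and w: "w > 0" "real m / w < \<delta>0"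
  shows "\<bar>durrmeyer \<phi> \<psi> w f x - f x\<bar> \<le>
    ((Aphi * P0 + 1) * K * real m powr \<alpha> + Jc m * (\<Sum>j\<in>{1..m}. real (m choose j)) * K) * w powr (-\<alpha>)"
proof -
  define a where "a = 1 / w"
  have a0: "a > 0" unfolding a_def using w by simp
  have ma: "real m * a < \<delta>0" unfolding a_def using w by simp
  define cf where "cf = (\<lambda>j::nat. (-1::real) ^ m * real (m choose j) * (-1) ^ (m - j))"
  define F where "F = (\<lambda>y. - (\<Sum>j\<in>{1..m}. cf j * (Pop (real j * a) ^^ m) f y))"
  define Cm where "Cm = (\<Sum>j\<in>{1..m}. real (m choose j))"
  have Cm0: "Cm \<ge> 0" unfolding Cm_def by (simp add: sum_nonneg)
  have cfa: "\<bar>cf j\<bar> = real (m choose j)" for j unfolding cf_def by (simp add: abs_mult power_abs)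
  have jpos: "real j * a > 0" if "j \<in> {1..m}" for j using that a0 by simp
  have jle: "real j * a \<le> real m * a" if "j \<in> {1..m}" for j using that a0 by (intro mult_right_mono) auto
  have jge: "a \<le> real j * a" if "j \<in> {1..m}" for j using that a0 by simp
  have Pc: "continuous_on UNIV ((Pop b ^^ m) f)" for b by (rule Pn_cont[OF fc])
  have Fc: "continuous_on UNIV F" unfolding F_def by (intro continuous_intros Pc)
  have PB: "\<bar>(Pop b ^^ m) f y\<bar> \<le> Bf" if "b > 0" for b y by (rule Pn_bound[OF that fc]) (rule fB)
  define BF where "BF = Cm * Bf"
  have FB: "\<bar>F y\<bar> \<le> BF" for y
  proof -
    have "\<bar>F y\<bar> = \<bar>\<Sum>j\<in>{1..m}. cf j * (Pop (real j * a) ^^ m) f y\<bar>" unfolding F_def by simp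
    also have "\<dots> \<le> (\<Sum>j\<in>{1..m}. \<bar>cf j * (Pop (real j * a) ^^ m) f y\<bar>)" by (rule sum_abs)
    also have "\<dots> \<le> (\<Sum>j\<in>{1..m}. real (m choose j) * Bf)"
      by (intro sum_mono) (auto simp: abs_mult cfa intro!: mult_left_mono PB jpos)
    also have "\<dots> = BF" unfolding BF_def Cm_def by (simp add: sum_distrib_right)
    finally show ?thesis .
  qed
  have c1: "continuous_on UNIV (\<lambda>u. f (y + real j * u))" for y j
  proof -
    have "continuous_on UNIV (\<lambda>u::real. y + real j * u)" by (intro continuous_intros)
    then show ?thesis by (rule continuous_on_compose2[OF fc]) auto
  qed
  have err: "\<bar>f y - F y\<bar> \<le> K * (real m * a) powr \<alpha>" for y
  proof -
    have "(Pop a ^^ m) (\<lambda>u. \<Sum>j\<in>{0..m}. cf j * f (y + real j * u)) 0 = (\<Sum>j\<in>{0..m}. cf j * (Pop a ^^ m) (\<lambda>u. f (y + real j * u)) 0)"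
      by (rule Pn_lin) (auto intro: c1)
    also have "\<dots> = cf 0 * (Pop a ^^ m) (\<lambda>u. f (y + real 0 * u)) 0 + (\<Sum>j\<in>{1..m}. cf j * (Pop a ^^ m) (\<lambda>u. f (y + real j * u)) 0)"
      by (subst sum.atLeast_Suc_atMost) auto
    also have "(Pop a ^^ m) (\<lambda>u. f (y + real 0 * u)) 0 = f y"
      using Pn_const[of a m "f y"] a0 by simp
    also have "(\<Sum>j\<in>{1..m}. cf j * (Pop a ^^ m) (\<lambda>u. f (y + real j * u)) 0) = (\<Sum>j\<in>{1..m}. cf j * (Pop (real j * a) ^^ m) f y)"
    proof (rule sum.cong[OF refl])
      fix j assume j: "j \<in> {1..m}"
      have "(Pop a ^^ m) (\<lambda>u. f (y + real j * u)) 0 = (Pop (real j * a) ^^ m) f (y + real j * 0)"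
        by (rule Pn_scale) (use j fc in auto)
      thus "cf j * (Pop a ^^ m) (\<lambda>u. f (y + real j * u)) 0 = cf j * (Pop (real j * a) ^^ m) f y" by simp
    qed
    also have "cf 0 = 1" unfolding cf_def by (simp flip: power_add)
    finally have eq: "f y - F y = (Pop a ^^ m) (\<lambda>u. \<Sum>j\<in>{0..m}. cf j * f (y + real j * u)) 0"
      unfolding F_def by simp
    have eq2: "(\<lambda>u. \<Sum>j\<in>{0..m}. cf j * f (y + real j * u)) = (\<lambda>u. (-1) ^ m * fdiff m f u y)"
      unfolding cf_def fdiff_def by (simp add: sum_distrib_left mult_ac)
    have cont2: "continuous_on UNIV (\<lambda>u. \<Sum>j\<in>{0..m}. cf j * f (y + real j * u))"
      by (intro continuous_intros c1)
    have "\<bar>(Pop a ^^ m) (\<lambda>u. \<Sum>j\<in>{0..m}. cf j * f (y + real j * u)) 0\<bar> \<le> K * (real m * a) powr \<alpha>"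
    proof (rule Pn_bound[OF a0 cont2])
      fix t assume t: "0 \<le> t" "t \<le> 0 + real m * a"
      have "\<bar>\<Sum>j\<in>{0..m}. cf j * f (y + real j * t)\<bar> = \<bar>fdiff m f t y\<bar>"
        using fun_cong[OF eq2, of t] by (simp add: abs_mult)
      also have "\<dots> \<le> K * t powr \<alpha>" using lip[of t y] t ma by simp
      also have "\<dots> \<le> K * (real m * a) powr \<alpha>"
        by (intro mult_left_mono powr_mono2) (use t am K in auto)
      finally show "\<bar>\<Sum>j\<in>{0..m}. cf j * f (y + real j * t)\<bar> \<le> K * (real m * a) powr \<alpha>" .
    qed
    with eq show ?thesis by simp
  qed
  define difF where "difF = (\<lambda>i y. - (\<Sum>j\<in>{1..m}. cf j * dfam (real j * a) m f i y))"
  have dF0: "difF 0 = F" unfolding difF_def F_def dfam0 by simp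
  have dFd: "(difF i has_real_derivative difF (Suc i) t) (at t)" if "i < m" for i t
    unfolding difF_def by (intro DERIV_minus DERIV_sum DERIV_cmult dfam_deriv[OF fc that])
  have dFm: "\<bar>difF m t\<bar> \<le> Cm * K * a powr (\<alpha> - real m)" for t
  proof -
    have "\<bar>difF m t\<bar> = \<bar>\<Sum>j\<in>{1..m}. cf j * dfam (real j * a) m f m t\<bar>" unfolding difF_def by simp
    also have "\<dots> \<le> (\<Sum>j\<in>{1..m}. \<bar>cf j * dfam (real j * a) m f m t\<bar>)" by (rule sum_abs)
    also have "\<dots> \<le> (\<Sum>j\<in>{1..m}. real (m choose j) * (K * a powr (\<alpha> - real m)))"
    proof (rule sum_mono)
      fix j assume j: "j \<in> {1..m}"
      define b where "b = real j * a"
      have b0: "b > 0" and bm: "b < \<delta>0" and ab: "a \<le> b"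
        unfolding b_def using jpos[OF j] jle[OF j] ma jge[OF j] by auto
      have "dfam b m f m t = fdiff m f b t / b ^ m" unfolding dfam_m by (rule Eop_fdiff) (use b0 in simp)
      hence "\<bar>cf j * dfam b m f m t\<bar> = real (m choose j) * (\<bar>fdiff m f b t\<bar> / b ^ m)"
        using b0 by (simp add: abs_mult cfa)
      also have "\<dots> \<le> real (m choose j) * (K * b powr \<alpha> / b ^ m)"
        by (intro mult_left_mono divide_right_mono lip) (use b0 bm in auto)
      also have "K * b powr \<alpha> / b ^ m = K * b powr (\<alpha> - real m)"
        using b0 by (simp add: powr_diff powr_realpow)
      also have "\<dots> \<le> K * a powr (\<alpha> - real m)"
        by (intro mult_left_mono powr_mono2') (use am ab a0 K in auto)
      finally show "\<bar>cf j * dfam (real j * a) m f m t\<bar> \<le> real (m choose j) * (K * a powr (\<alpha> - real m))"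
        unfolding b_def by (simp add: mult_left_mono)
    qed
    also have "\<dots> = Cm * K * a powr (\<alpha> - real m)" unfolding Cm_def sum_distrib_right[symmetric] by (simp only: mult.assoc)
    finally show ?thesis .
  qed
  have jF: "\<bar>durrmeyer \<phi> \<psi> w F x - F x\<bar> \<le> Jc m * (Cm * K * a powr (\<alpha> - real m)) / w ^ m"
    by (rule jackson[OF m w(1) Fc FB dF0 dFd dFm])
  have fFc: "continuous_on UNIV (\<lambda>y. f y - F y)" by (intro continuous_intros fc Fc)
  have dd: "durrmeyer \<phi> \<psi> w (\<lambda>y. f y - F y) x = durrmeyer \<phi> \<psi> w f x - durrmeyer \<phi> \<psi> w F x"
    by (rule durr_diff[OF w(1) fc fB Fc FB])
  have db: "\<bar>durrmeyer \<phi> \<psi> w (\<lambda>y. f y - F y) x\<bar> \<le> Aphi * P0 * (K * (real m * a) powr \<alpha>)"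
    using conjunct2[OF durr_bound[OF w(1) fFc err]] .
  have tri: "\<bar>durrmeyer \<phi> \<psi> w f x - f x\<bar> \<le> \<bar>durrmeyer \<phi> \<psi> w (\<lambda>y. f y - F y) x\<bar> + \<bar>f x - F x\<bar> + \<bar>durrmeyer \<phi> \<psi> w F x - F x\<bar>"
    using dd by arith
  have aw: "a powr \<alpha> = w powr (-\<alpha>)" unfolding a_def using w by (simp add: powr_minus_divide powr_divide)
  have am': "a powr (\<alpha> - real m) / w ^ m = a powr \<alpha>"
  proof -
    have "a powr (\<alpha> - real m) / w ^ m = a powr (\<alpha> - real m) * a powr (real m)"
      unfolding a_def using w by (simp add: powr_realpow power_one_over divide_inverse power_inverse)
    also have "\<dots> = a powr \<alpha>" by (simp add: powr_add[symmetric])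
    finally show ?thesis .
  qed
  have mpa: "(real m * a) powr \<alpha> = real m powr \<alpha> * a powr \<alpha>" using a0 by (simp add: powr_mult)
  have "\<bar>durrmeyer \<phi> \<psi> w f x - f x\<bar> \<le> Aphi * P0 * (K * (real m * a) powr \<alpha>) + K * (real m * a) powr \<alpha> +
      Jc m * (Cm * K * a powr (\<alpha> - real m)) / w ^ m"
    using tri db err[of x] jF by linarith
  also have "Jc m * (Cm * K * a powr (\<alpha> - real m)) / w ^ m = Jc m * Cm * K * (a powr (\<alpha> - real m) / w ^ m)"
    by (simp only: times_divide_eq_right mult.assoc)
  also have "\<dots> = Jc m * Cm * K * a powr \<alpha>" unfolding am' ..
  also have "Aphi * P0 * (K * (real m * a) powr \<alpha>) + K * (real m * a) powr \<alpha> + Jc m * Cm * K * a powr \<alpha> =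
     ((Aphi * P0 + 1) * K * real m powr \<alpha> + Jc m * Cm * K) * a powr \<alpha>"
    unfolding mpa by (simp add: algebra_simps)
  finally show ?thesis unfolding aw Cm_def .
qed

end

theorem corollary3p2:
  fixes r :: nat and \<phi> \<psi> :: "real \<Rightarrow> real" and \<theta> :: real
  assumes "r \<ge> 2"
    and "discrete_kernel \<phi>" and "continuous_kernel \<psi>"
    and "cond_i r \<phi>" and "cond_ii r \<phi> \<psi>"
    and "\<theta> > real r + 1" and "cond_Theta \<theta> \<phi>" and "cond_Theta \<theta> \<psi>"
  shows "(\<forall>(f::real \<Rightarrow> real) (\<alpha>::real). LipStar \<alpha> f \<and> 0 < \<alpha> \<and> \<alpha> < real r \<longrightarrow>
            (\<lambda>w. supnorm (\<lambda>x. durrmeyer \<phi> \<psi> w f x - f x)) \<in> O[at_top](\<lambda>w. w powr (-\<alpha>)))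
       \<and> (\<forall>f::real \<Rightarrow> real. Cr r f \<longrightarrow>
            (\<lambda>w. supnorm (\<lambda>x. durrmeyer \<phi> \<psi> w f x - f x)) \<in> O[at_top](\<lambda>w. w powr (-real r)))"
proof -
  interpret kern r \<phi> \<psi> \<theta> using assms by (simp add: kern_def)
  have partA: "(\<lambda>w. supnorm (\<lambda>x. durrmeyer \<phi> \<psi> w f x - f x)) \<in> O[at_top](\<lambda>w. w powr (-\<alpha>))"
    if H: "LipStar \<alpha> f" "0 < \<alpha>" "\<alpha> < real r" for f :: "real \<Rightarrow> real" and \<alpha> :: real
  proof -
    define m where "m = nat \<lfloor>\<alpha>\<rfloor> + 1"
    have fl0: "\<lfloor>\<alpha>\<rfloor> \<ge> 0" using H(2) by simp
    have rm: "real m = of_int \<lfloor>\<alpha>\<rfloor> + 1" unfolding m_def using fl0 by simp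
    have m1: "1 \<le> m" unfolding m_def by simp
    have "\<lfloor>\<alpha>\<rfloor> < int r" using H(3) by (simp add: floor_less_iff)
    hence mr: "m \<le> r" unfolding m_def using fl0 by linarith
    have am: "\<alpha> < real m" unfolding rm by linarith
    obtain K \<delta>0 where K: "K \<ge> 0" "\<delta>0 > 0" "\<And>t x. 0 \<le> t \<and> t < \<delta>0 \<longrightarrow> \<bar>fdiff m f t x\<bar> \<le> K * t powr \<alpha>"
      using lip_extract[OF H(1) H(2) m_def] by blast
    have bc: "bucont f" using H(1) unfolding LipStar_def by simp
    obtain Bf where Bf: "\<And>x. \<bar>f x\<bar> \<le> Bf" using bc unfolding bucont_def bounded_iff by auto
    have fc: "continuous_on UNIV f" using bc unfolding bucont_def by (simp add: uniformly_continuous_imp_continuous)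
    define C where "C = (Aphi * P0 + 1) * K * real m powr \<alpha> + Jc m * (\<Sum>j\<in>{1..m}. real (m choose j)) * K"
    have ev: "eventually (\<lambda>w. norm (supnorm (\<lambda>x. durrmeyer \<phi> \<psi> w f x - f x)) \<le> (\<bar>C\<bar> + 1) * norm (w powr (-\<alpha>))) at_top"
    proof (rule eventually_mono[OF eventually_gt_at_top[of "max 1 (real m / \<delta>0)"]])
      fix w :: real assume w: "max 1 (real m / \<delta>0) < w"
      have w0: "w > 0" using w by simp
      have wd: "real m / w < \<delta>0" using w K(2) w0 by (simp add: field_simps)
      have "\<bar>durrmeyer \<phi> \<psi> w f x - f x\<bar> \<le> C * w powr (-\<alpha>)" for x
        unfolding C_def
        by (rule smooth_est[OF m1 mr am H(2) fc Bf K(1) K(2) _ w0 wd]) (use K(3) in blast)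
      hence "\<bar>supnorm (\<lambda>x. durrmeyer \<phi> \<psi> w f x - f x)\<bar> \<le> C * w powr (-\<alpha>)" by (rule supnorm_le)
      also have "\<dots> \<le> (\<bar>C\<bar> + 1) * w powr (-\<alpha>)" by (intro mult_right_mono) auto
      finally show "norm (supnorm (\<lambda>x. durrmeyer \<phi> \<psi> w f x - f x)) \<le> (\<bar>C\<bar> + 1) * norm (w powr (-\<alpha>))"
        by simp
    qed
    show ?thesis by (rule landau_o.bigI[OF _ ev]) simp
  qed
  have partB: "(\<lambda>w. supnorm (\<lambda>x. durrmeyer \<phi> \<psi> w f x - f x)) \<in> O[at_top](\<lambda>w. w powr (-real r))"
    if H: "Cr r f" for f :: "real \<Rightarrow> real"
  proof -
    have dd: "\<And>i t. i < r \<Longrightarrow> ((deriv ^^ i) f has_real_derivative (deriv ^^ Suc i) f t) (at t)"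
      using H unfolding Cr_def by blast
    have bc: "bucont f" using H unfolding Cr_def by (metis funpow_0 le0)
    have bcr: "bucont ((deriv ^^ r) f)" using H unfolding Cr_def by blast
    obtain Bf where Bf: "\<And>x. \<bar>f x\<bar> \<le> Bf" using bc unfolding bucont_def bounded_iff by auto
    obtain M where M: "\<And>x. \<bar>(deriv ^^ r) f x\<bar> \<le> M" using bcr unfolding bucont_def bounded_iff by auto
    have fc: "continuous_on UNIV f" using bc unfolding bucont_def by (simp add: uniformly_continuous_imp_continuous)
    have r1: "1 \<le> r" using assms(1) by simp
    define C where "C = Jc r * M"
    have ev: "eventually (\<lambda>w. norm (supnorm (\<lambda>x. durrmeyer \<phi> \<psi> w f x - f x)) \<le> (\<bar>C\<bar> + 1) * norm (w powr (-real r))) at_top"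
    proof (rule eventually_mono[OF eventually_gt_at_top[of "0::real"]])
      fix w :: real assume w0: "0 < w"
      have "\<bar>durrmeyer \<phi> \<psi> w f x - f x\<bar> \<le> C * w powr (-real r)" for x
      proof -
        have "\<bar>durrmeyer \<phi> \<psi> w f x - f x\<bar> \<le> Jc r * M / w ^ r"
          by (rule jackson[OF r1 order.refl w0 fc Bf _ dd M]) simp
        also have "\<dots> = C * w powr (-real r)" unfolding C_def using w0
          by (simp add: powr_minus powr_realpow divide_inverse)
        finally show ?thesis .
      qed
      hence "\<bar>supnorm (\<lambda>x. durrmeyer \<phi> \<psi> w f x - f x)\<bar> \<le> C * w powr (-real r)" by (rule supnorm_le)
      also have "\<dots> \<le> (\<bar>C\<bar> + 1) * w powr (-real r)" by (intro mult_right_mono) auto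
      finally show "norm (supnorm (\<lambda>x. durrmeyer \<phi> \<psi> w f x - f x)) \<le> (\<bar>C\<bar> + 1) * norm (w powr (-real r))"
        by simp
    qed
    show ?thesis by (rule landau_o.bigI[OF _ ev]) simp
  qed
  show ?thesis using partA partB by blast
qed

end
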